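(* Let $G\in\mathfrak{Y}_n$ be an infinite finitely generated soluble group. Then $G$ is abelian.
   Context: $\mathfrak{Y}_n$ denotes the class of all groups $G$ (finite or infinite) such that $N_G(A)=A$ for every non-abelian subgroup $A\le G$. *)

theory Defs
  imports "HOL-Algebra.Algebra"
begin

definition Yn_group :: "('a, 'b) monoid_scheme \<Rightarrow> bool" where
  "Yn_group G \<longleftrightarrow> group G \<and>
     (\<forall>A. subgroup A G \<and> \<not> comm_group (G\<lparr>carrier := A\<rparr>) \<longrightarrow> normalizer G A = A)"

definition finitely_generated_group :: "('a, 'b) monoid_scheme \<Rightarrow> bool" where
  "finitely_generated_group G \<longleftrightarrow>
     (\<exists>S. finite S \<and> S \<subseteq> carrier G \<and> generate G S = carrier G)"

end

theory Submission
  imports Defs "HOL-Computational_Algebra.Primes"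
begin

context group begin

lemma my_cancel1 [simp]: "x \<in> carrier G \<Longrightarrow> w \<in> carrier G \<Longrightarrow> inv x \<otimes> (x \<otimes> w) = w"
  by (simp add: m_assoc[symmetric])
lemma my_cancel2 [simp]: "x \<in> carrier G \<Longrightarrow> w \<in> carrier G \<Longrightarrow> x \<otimes> (inv x \<otimes> w) = w"
  by (simp add: m_assoc[symmetric])

lemma conj_nat_pow:
  assumes "g \<in> carrier G" "a \<in> carrier G"
  shows "g \<otimes> a [^] (n::nat) \<otimes> inv g = (g \<otimes> a \<otimes> inv g) [^] n"
proof (induction n)
  case 0 then show ?case using assms by simp
next
  case (Suc n)
  have e: "inv g \<otimes> (g \<otimes> w) = w" if "w \<in> carrier G" for w
    using that assms by (simp add: m_assoc[symmetric])
  have "g \<otimes> a [^] Suc n \<otimes> inv g = (g \<otimes> a [^] n \<otimes> inv g) \<otimes> (g \<otimes> a \<otimes> inv g)"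
    using assms by (simp add: m_assoc e)
  then show ?case using Suc by simp
qed

lemma conj_int_pow:
  assumes "g \<in> carrier G" "a \<in> carrier G"
  shows "g \<otimes> a [^] (n::int) \<otimes> inv g = (g \<otimes> a \<otimes> inv g) [^] n"
proof (cases "n < 0")
  case True
  have 1: "a [^] n = inv (a [^] nat (-n))" by (subst int_pow_def2) (simp add: True)
  have 2: "(g \<otimes> a \<otimes> inv g) [^] n = inv ((g \<otimes> a \<otimes> inv g) [^] nat (-n))"
    by (subst int_pow_def2) (simp add: True)
  have 3: "g \<otimes> inv (a [^] nat (-n)) \<otimes> inv g = inv (g \<otimes> a [^] nat (-n) \<otimes> inv g)"
    using assms by (simp add: inv_mult_group m_assoc)
  show ?thesis unfolding 1 2 3 using conj_nat_pow[OF assms] by simp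
next
  case False
  have 1: "a [^] n = a [^] nat n" by (subst int_pow_def2) (simp add: False)
  have 2: "(g \<otimes> a \<otimes> inv g) [^] n = (g \<otimes> a \<otimes> inv g) [^] nat n"
    by (subst int_pow_def2) (simp add: False)
  show ?thesis unfolding 1 2 using conj_nat_pow[OF assms] by simp
qed

lemma commute_int_pow:
  assumes "a \<in> carrier G" "b \<in> carrier G" "a \<otimes> b = b \<otimes> a"
  shows "a [^] (i::int) \<otimes> b = b \<otimes> a [^] i"
proof -
  have "b \<otimes> a [^] i \<otimes> inv b = (b \<otimes> a \<otimes> inv b) [^] i"
    using assms conj_int_pow by blast
  also have "b \<otimes> a \<otimes> inv b = a" using assms
    by (metis inv_solve_right m_closed)
  finally have "b \<otimes> a [^] i \<otimes> inv b = a [^] i" .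
  then show ?thesis using assms
    by (metis int_pow_closed inv_solve_right m_closed)
qed

lemma commute_int_pow2:
  assumes "a \<in> carrier G" "b \<in> carrier G" "a \<otimes> b = b \<otimes> a"
  shows "a [^] (i::int) \<otimes> b [^] (j::int) = b [^] j \<otimes> a [^] i"
proof -
  have "a \<otimes> b [^] j = b [^] j \<otimes> a" using commute_int_pow assms by metis
  then show ?thesis using commute_int_pow assms by (metis int_pow_closed)
qed

lemma pow_commute_self:
  assumes "a \<in> carrier G"
  shows "a [^] (i::int) \<otimes> a [^] (j::int) = a [^] j \<otimes> a [^] i"
  using assms by (metis add.commute int_pow_mult)

definition PS :: "'a set \<Rightarrow> 'a \<Rightarrow> 'a set" where
  "PS M y = {m \<otimes> y [^] (j::int) | m j. m \<in> M}"

lemma PS_conj_pow: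
  assumes M: "subgroup M G" and y: "y \<in> carrier G"
    and c1: "\<And>m. m \<in> M \<Longrightarrow> y \<otimes> m \<otimes> inv y \<in> M"
    and c2: "\<And>m. m \<in> M \<Longrightarrow> inv y \<otimes> m \<otimes> y \<in> M"
    and m: "m \<in> M"
  shows "y [^] (j::int) \<otimes> m \<otimes> inv (y [^] j) \<in> M"
proof -
  have Mc: "\<And>m. m \<in> M \<Longrightarrow> m \<in> carrier G" using subgroup.mem_carrier[OF M] by simp
  have nat1: "\<And>m. m \<in> M \<Longrightarrow> y [^] (n::nat) \<otimes> m \<otimes> inv (y [^] n) \<in> M" for n
  proof (induction n)
    case 0 then show ?case using Mc[OF 0] by simp
  next
    case (Suc n)
    have mc: "m \<in> carrier G" using Suc Mc by blast
    have "y [^] Suc n \<otimes> m \<otimes> inv (y [^] Suc n) = y [^] n \<otimes> (y \<otimes> m \<otimes> inv y) \<otimes> inv (y [^] n)"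
      using y mc by (simp add: m_assoc inv_mult_group)
    moreover have "y \<otimes> m \<otimes> inv y \<in> M" using c1 Suc.prems .
    ultimately show ?case using Suc.IH by simp
  qed
  have nat2: "\<And>m. m \<in> M \<Longrightarrow> inv (y [^] (n::nat)) \<otimes> m \<otimes> y [^] n \<in> M" for n
  proof (induction n)
    case 0 then show ?case using Mc[OF 0] by simp
  next
    case (Suc n)
    have mc: "m \<in> carrier G" using Suc Mc by blast
    have "inv (y [^] Suc n) \<otimes> m \<otimes> y [^] Suc n = inv y \<otimes> (inv (y [^] n) \<otimes> m \<otimes> y [^] n) \<otimes> y"
      using y mc by (simp add: m_assoc inv_mult_group)
    moreover have "inv (y [^] n) \<otimes> m \<otimes> y [^] n \<in> M" using Suc.IH Suc.prems .
    ultimately show ?case using c2 by simp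
  qed
  show ?thesis
  proof (cases "j < 0")
    case True
    have "y [^] j = inv (y [^] nat (-j))" by (subst int_pow_def2) (simp add: True)
    then show ?thesis using nat2[OF m, of "nat (-j)"] y by simp
  next
    case False
    have "y [^] j = y [^] nat j" by (subst int_pow_def2) (simp add: False)
    then show ?thesis using nat1[OF m, of "nat j"] y by simp
  qed
qed

lemma PS_subgroup:
  assumes M: "subgroup M G" and y: "y \<in> carrier G"
    and c1: "\<And>m. m \<in> M \<Longrightarrow> y \<otimes> m \<otimes> inv y \<in> M"
    and c2: "\<And>m. m \<in> M \<Longrightarrow> inv y \<otimes> m \<otimes> y \<in> M"
  shows "subgroup (PS M y) G"
proof -
  have cj: "y [^] (j::int) \<otimes> m \<otimes> inv (y [^] j) \<in> M" if "m \<in> M" for m j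
    by (rule PS_conj_pow[OF M y c1 c2 that])
  have Mc: "\<And>m. m \<in> M \<Longrightarrow> m \<in> carrier G" using subgroup.mem_carrier[OF M] by simp
  show ?thesis
  proof (rule subgroupI)
    show "PS M y \<subseteq> carrier G" using Mc y by (auto simp: PS_def)
    have "\<one> \<otimes> y [^] (0::int) \<in> PS M y" unfolding PS_def using subgroup.one_closed[OF M] by blast
    then show "PS M y \<noteq> {}" by blast
  next
    fix a assume "a \<in> PS M y"
    then obtain m j where a: "a = m \<otimes> y [^] (j::int)" "m \<in> M" unfolding PS_def by blast
    have "inv a = (y [^] (-j) \<otimes> inv m \<otimes> inv (y [^] (-j))) \<otimes> y [^] (-j)"
      using a Mc[OF a(2)] y by (simp add: inv_mult_group m_assoc int_pow_neg)
    moreover have "y [^] (-j) \<otimes> inv m \<otimes> inv (y [^] (-j)) \<in> M"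
      using cj subgroup.m_inv_closed[OF M a(2)] by simp
    ultimately show "inv a \<in> PS M y" unfolding PS_def by blast
  next
    fix a b assume "a \<in> PS M y" "b \<in> PS M y"
    then obtain m j n k where a: "a = m \<otimes> y [^] (j::int)" "m \<in> M"
        and b: "b = n \<otimes> y [^] (k::int)" "n \<in> M" unfolding PS_def by blast
    have "a \<otimes> b = (m \<otimes> (y [^] j \<otimes> n \<otimes> inv (y [^] j))) \<otimes> y [^] (j + k)"
      using a b Mc y by (simp add: m_assoc int_pow_mult)
    moreover have "m \<otimes> (y [^] j \<otimes> n \<otimes> inv (y [^] j)) \<in> M"
      using cj[OF b(2)] subgroup.m_closed[OF M a(2)] by simp
    ultimately show "a \<otimes> b \<in> PS M y" unfolding PS_def by blast
  qed
qed

lemma PS_incl: "subgroup M G \<Longrightarrow> m \<in> M \<Longrightarrow> m \<in> PS M y"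
  unfolding PS_def by (rule CollectI, rule exI[of _ m], rule exI[of _ 0])
    (simp add: subgroup.mem_carrier)

lemma PS_gen: "subgroup M G \<Longrightarrow> y \<in> carrier G \<Longrightarrow> y \<in> PS M y"
  unfolding PS_def by (rule CollectI, rule exI[of _ \<one>], rule exI[of _ 1])
    (simp add: subgroup.one_closed)

lemma comm_sub_iff:
  assumes "subgroup A G"
  shows "comm_group (G\<lparr>carrier := A\<rparr>) \<longleftrightarrow> (\<forall>a\<in>A. \<forall>b\<in>A. a \<otimes> b = b \<otimes> a)"
proof
  assume "comm_group (G\<lparr>carrier := A\<rparr>)"
  then show "\<forall>a\<in>A. \<forall>b\<in>A. a \<otimes> b = b \<otimes> a"
    using comm_groupE(4) by fastforce
next
  assume h: "\<forall>a\<in>A. \<forall>b\<in>A. a \<otimes> b = b \<otimes> a"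
  show "comm_group (G\<lparr>carrier := A\<rparr>)"
    by (rule group.group_comm_groupI) (use assms subgroup_imp_group h in auto)
qed

end


locale yn_grp = group G for G (structure) +
  assumes Yn: "Yn_group G"
begin

lemma Y1:
  assumes H: "subgroup H G" and a: "a \<in> H" and b: "b \<in> H" and ab: "a \<otimes> b \<noteq> b \<otimes> a"
    and g: "g \<in> carrier G"
    and c1: "\<And>h. h \<in> H \<Longrightarrow> g \<otimes> h \<otimes> inv g \<in> H"
    and c2: "\<And>h. h \<in> H \<Longrightarrow> inv g \<otimes> h \<otimes> g \<in> H"
  shows "g \<in> H"
proof -
  have nc: "\<not> comm_group (G\<lparr>carrier := H\<rparr>)" using comm_sub_iff[OF H] a b ab by blast
  have NH: "normalizer G H = H" using Yn H nc unfolding Yn_group_def by blast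
  have Hc: "H \<subseteq> carrier G" using subgroup.subset[OF H] .
  have eq: "g <# H #> inv g = H"
  proof
    show "g <# H #> inv g \<subseteq> H"
      unfolding l_coset_def r_coset_def using c1 by auto
  next
    show "H \<subseteq> g <# H #> inv g"
    proof
      fix h assume h: "h \<in> H"
      have hc: "h \<in> carrier G" using Hc h by blast
      have "h = g \<otimes> (inv g \<otimes> h \<otimes> g) \<otimes> inv g" using g hc by (simp add: m_assoc)
      moreover have "inv g \<otimes> h \<otimes> g \<in> H" using c2 h .
      ultimately show "h \<in> g <# H #> inv g"
        unfolding l_coset_def r_coset_def by blast
    qed
  qed
  have "g \<in> normalizer G H"
    unfolding normalizer_def stabilizer_def using g Hc eq by simp
  then show ?thesis using NH by simp
qed

abbreviation "DD \<equiv> derived G (carrier G)"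

lemma DD_sub: "subgroup DD G"
  using derived_is_subgroup[of "carrier G"] by simp

lemma comm_in_DD:
  assumes "g \<in> carrier G" "h \<in> carrier G"
  shows "g \<otimes> h \<otimes> inv g \<otimes> inv h \<in> DD"
  unfolding derived_def by (rule generate.incl) (use assms in blast)

lemma conj_DD:
  assumes H: "subgroup H G" and D: "DD \<subseteq> H" and g: "g \<in> carrier G" and h: "h \<in> H"
  shows "g \<otimes> h \<otimes> inv g \<in> H"
proof -
  have hc: "h \<in> carrier G" using subgroup.mem_carrier[OF H h] .
  have "g \<otimes> h \<otimes> inv g = (g \<otimes> h \<otimes> inv g \<otimes> inv h) \<otimes> h"
    using g hc by (simp add: m_assoc)
  moreover have "g \<otimes> h \<otimes> inv g \<otimes> inv h \<in> H" using comm_in_DD[OF g hc] D by blast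
  ultimately show ?thesis using subgroup.m_closed[OF H _ h] by metis
qed

lemma conj_DD':
  assumes H: "subgroup H G" and D: "DD \<subseteq> H" and g: "g \<in> carrier G" and h: "h \<in> H"
  shows "inv g \<otimes> h \<otimes> g \<in> H"
  using conj_DD[OF H D _ h, of "inv g"] g by simp

lemma P_comm:
  assumes H: "subgroup H G" and D: "DD \<subseteq> H" and ne: "H \<noteq> carrier G"
    and a: "a \<in> H" and b: "b \<in> H"
  shows "a \<otimes> b = b \<otimes> a"
proof (rule ccontr)
  assume ab: "a \<otimes> b \<noteq> b \<otimes> a"
  have "carrier G \<subseteq> H"
  proof
    fix g assume g: "g \<in> carrier G"
    show "g \<in> H"
      by (rule Y1[OF H a b ab g]) (use conj_DD[OF H D g] conj_DD'[OF H D g] in auto)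
  qed
  then show False using ne subgroup.subset[OF H] by blast
qed

lemma Q_gen:
  assumes N: "subgroup N G" and D: "DD \<subseteq> N" and x: "x \<in> carrier G"
    and a: "a \<in> N" and xa: "x \<otimes> a \<noteq> a \<otimes> x"
    and g: "g \<in> carrier G"
  shows "\<exists>n\<in>N. \<exists>j::int. g = n \<otimes> x [^] j"
proof -
  have S: "subgroup (PS N x) G"
    by (rule PS_subgroup[OF N x]) (use conj_DD[OF N D x] conj_DD'[OF N D x] in auto)
  have "DD \<subseteq> PS N x" using D PS_incl[OF N] by blast
  moreover have "a \<in> PS N x" using PS_incl[OF N a] .
  moreover have "x \<in> PS N x" using PS_gen[OF N x] .
  ultimately have "PS N x = carrier G"
    using P_comm[OF S] xa by metis
  then have "g \<in> PS N x" using g by simp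
  then show ?thesis unfolding PS_def by blast
qed

end


locale sctx = yn_grp G for G (structure) +
  fixes N x p a0
  assumes Nsub: "subgroup N G"
    and Ncomm: "\<And>a b. a \<in> N \<Longrightarrow> b \<in> N \<Longrightarrow> a \<otimes> b = b \<otimes> a"
    and Nnorm: "\<And>g n. g \<in> carrier G \<Longrightarrow> n \<in> N \<Longrightarrow> g \<otimes> n \<otimes> inv g \<in> N"
    and xG: "x \<in> carrier G"
    and pprime: "normalization_semidom_class.prime (p::nat)"
    and xpN: "x [^] p \<in> N"
    and a0N: "a0 \<in> N" and a0x: "x \<otimes> a0 \<noteq> a0 \<otimes> x"
    and gen: "\<And>g. g \<in> carrier G \<Longrightarrow> \<exists>n\<in>N. \<exists>j::int. g = n \<otimes> x [^] j"
begin

lemma Nc: "a \<in> N \<Longrightarrow> a \<in> carrier G"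
  using subgroup.mem_carrier[OF Nsub] .

lemma Nmult: "a \<in> N \<Longrightarrow> b \<in> N \<Longrightarrow> a \<otimes> b \<in> N"
  using subgroup.m_closed[OF Nsub] .

lemma Ninv: "a \<in> N \<Longrightarrow> inv a \<in> N"
  using subgroup.m_inv_closed[OF Nsub] .

lemma Npow: "a \<in> N \<Longrightarrow> a [^] (k::int) \<in> N"
  using subgroup_int_pow_closed[OF Nsub] .

lemma None: "\<one> \<in> N"
  using subgroup.one_closed[OF Nsub] .

lemma Nlcomm: "a \<in> N \<Longrightarrow> b \<in> N \<Longrightarrow> c \<in> carrier G \<Longrightarrow> a \<otimes> (b \<otimes> c) = b \<otimes> (a \<otimes> c)"
  by (metis Nc Ncomm m_assoc)

lemma p_gt1: "1 < p" using prime_gt_1_nat[OF pprime] .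

definition z where "z = x [^] p"

lemma z_int: "z = x [^] (int p)" unfolding z_def by (simp add: int_pow_int)

lemma zN: "z \<in> N" unfolding z_def using xpN .
lemma zG: "z \<in> carrier G" using Nc[OF zN] .

lemma z_central: assumes g: "g \<in> carrier G" shows "z \<otimes> g = g \<otimes> z"
proof -
  obtain n j where n: "n \<in> N" and gj: "g = n \<otimes> x [^] (j::int)" using gen[OF g] by blast
  have 1: "z \<otimes> x [^] j = x [^] j \<otimes> z" unfolding z_int using pow_commute_self[OF xG] by simp
  have "z \<otimes> g = n \<otimes> (z \<otimes> x [^] j)" unfolding gj
    using Nlcomm[OF zN n] xG by (simp add: m_assoc[symmetric])
  also have "\<dots> = g \<otimes> z" unfolding 1 gj using n Nc xG zG by (simp add: m_assoc)
  finally show ?thesis .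
qed

lemma zpow_central: assumes g: "g \<in> carrier G" shows "z [^] (i::int) \<otimes> g = g \<otimes> z [^] i"
  using commute_int_pow[OF zG g z_central[OF g]] .

lemma x_pow_p_mult: "x [^] (int p * t) = z [^] t"
  unfolding z_int using int_pow_pow[OF xG] by simp

lemma idx: assumes j: "x [^] (j::int) \<in> N" shows "int p dvd j"
proof (rule ccontr)
  assume nd: "\<not> int p dvd j"
  have pr: "normalization_semidom_class.prime (int p)" using pprime by (simp add: prime_nat_int_transfer)
  have "coprime (int p) j" using prime_imp_coprime[OF pr nd] .
  then have "gcd (int p) j = 1" by simp
  then obtain u v where uv: "u * int p + v * j = 1" using bezout_int[of "int p" j] by auto
  have e: "int p * u + j * v = 1" using uv by (simp add: algebra_simps)
  have "x = x [^] (int p * u + j * v)" unfolding e using xG by simp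
  also have "\<dots> = (x [^] int p) [^] u \<otimes> (x [^] j) [^] v"
    using xG by (simp add: int_pow_mult int_pow_pow)
  finally have "x \<in> N" using Npow[OF xpN[folded z_def, unfolded z_int]] Npow[OF j] Nmult by metis
  then show False using a0x Ncomm a0N by blast
qed

definition phi where "phi a = x \<otimes> a \<otimes> inv x"
definition dl where "dl a = a \<otimes> inv (phi a)"

lemma phiG: "a \<in> carrier G \<Longrightarrow> phi a \<in> carrier G" unfolding phi_def using xG by simp
lemma phiN: "a \<in> N \<Longrightarrow> phi a \<in> N" unfolding phi_def using Nnorm xG by simp
lemma dlN: "a \<in> N \<Longrightarrow> dl a \<in> N" unfolding dl_def using phiN Ninv Nmult by simp
lemma dlG: "a \<in> N \<Longrightarrow> dl a \<in> carrier G" using Nc dlN by simp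

lemma phi_mult: "a \<in> carrier G \<Longrightarrow> b \<in> carrier G \<Longrightarrow> phi (a \<otimes> b) = phi a \<otimes> phi b"
  unfolding phi_def using xG by (simp add: m_assoc)

lemma phi_inv: "a \<in> carrier G \<Longrightarrow> phi (inv a) = inv (phi a)"
  unfolding phi_def using xG by (simp add: m_assoc inv_mult_group)

lemma phi_pow: "a \<in> carrier G \<Longrightarrow> phi (a [^] (k::int)) = phi a [^] k"
  unfolding phi_def using conj_int_pow[OF xG] by simp

lemma phi_z: "phi z = z"
proof -
  have "x \<otimes> z \<otimes> inv x = z \<otimes> x \<otimes> inv x" using z_central[OF xG] by simp
  then show ?thesis unfolding phi_def using xG zG by (simp add: m_assoc)
qed

lemma phi_zpow: "phi (z [^] (i::int)) = z [^] i"
  using phi_pow[OF zG] phi_z by simp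

lemma dl_mult: assumes a: "a \<in> N" and b: "b \<in> N" shows "dl (a \<otimes> b) = dl a \<otimes> dl b"
proof -
  have "dl (a \<otimes> b) = a \<otimes> b \<otimes> (inv (phi b) \<otimes> inv (phi a))"
    unfolding dl_def using phi_mult Nc a b phiG by (simp add: inv_mult_group)
  also have "\<dots> = a \<otimes> (inv (phi a) \<otimes> (b \<otimes> inv (phi b)))"
    using a b Nc phiN Ninv Nlcomm Ncomm by (simp add: m_assoc)
  also have "\<dots> = dl a \<otimes> dl b" unfolding dl_def using a b Nc phiG by (simp add: m_assoc)
  finally show ?thesis .
qed

lemma dl_one_iff: assumes a: "a \<in> N" shows "dl a = \<one> \<longleftrightarrow> x \<otimes> a = a \<otimes> x"
proof -
  have ac: "a \<in> carrier G" using Nc a .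
  have "dl a = \<one> \<longleftrightarrow> a = phi a" unfolding dl_def using ac phiG
    by (metis inv_closed inv_equality inv_inv r_inv)
  also have "\<dots> \<longleftrightarrow> a \<otimes> x = x \<otimes> a" unfolding phi_def using ac xG
    by (metis inv_solve_right m_closed)
  finally show ?thesis by auto
qed

lemma dl_inv: assumes a: "a \<in> N" shows "dl (inv a) = inv (dl a)"
proof -
  have "dl (inv a) \<otimes> dl a = dl (inv a \<otimes> a)" using dl_mult Ninv a by simp
  also have "\<dots> = \<one>" using dl_one_iff[OF None] Nc[OF a] xG by simp
  finally show ?thesis using dlG a Ninv by (simp add: inv_equality)
qed

lemma dl_npow: assumes a: "a \<in> N" shows "dl (a [^] (k::nat)) = dl a [^] k"
proof (induction k)
  case 0 then show ?case using dl_one_iff[OF None] xG by simp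
next
  case (Suc k)
  have "a [^] k \<in> N" using Npow[OF a, of "int k"] by (simp add: int_pow_int)
  then show ?case using dl_mult[OF _ a] Suc by simp
qed

lemma dl_pow: assumes a: "a \<in> N" shows "dl (a [^] (k::int)) = dl a [^] k"
proof (cases "k < 0")
  case True
  have 1: "a [^] k = inv (a [^] nat (-k))" by (subst int_pow_def2) (simp add: True)
  have 2: "dl a [^] k = inv (dl a [^] nat (-k))" by (subst int_pow_def2) (simp add: True)
  have "a [^] nat (-k) = a [^] (-k)" by (rule pow_nat) (use True in simp)
  then have "a [^] nat (-k) \<in> N" using Npow[OF a, of "-k"] by simp
  then show ?thesis unfolding 1 2 using dl_inv dl_npow[OF a] by simp
next
  case False
  have 1: "a [^] k = a [^] nat k" by (subst int_pow_def2) (simp add: False)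
  have 2: "dl a [^] k = dl a [^] nat k" by (subst int_pow_def2) (simp add: False)
  show ?thesis unfolding 1 2 using dl_npow[OF a] by simp
qed

lemma conj_ax: assumes a: "a \<in> N" shows "a \<otimes> x \<otimes> inv a = dl a \<otimes> x"
  unfolding dl_def phi_def using Nc[OF a] xG by (simp add: m_assoc inv_mult_group)

lemma conj_ax': assumes a: "a \<in> N" shows "inv a \<otimes> x \<otimes> a = inv (dl a) \<otimes> x"
  using conj_ax[OF Ninv[OF a]] dl_inv[OF a] Nc[OF a] by simp

end


primrec rp :: "('a, 'b) monoid_scheme \<Rightarrow> (nat \<Rightarrow> 'a) \<Rightarrow> nat \<Rightarrow> 'a" where
  "rp G f 0 = \<one>\<^bsub>G\<^esub>"
| "rp G f (Suc n) = rp G f n \<otimes>\<^bsub>G\<^esub> f n"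

context sctx begin

lemma PS_N:
  assumes M: "M \<subseteq> N" and a: "a \<in> N" and aP: "a \<in> PS M x"
  shows "\<exists>m\<in>M. \<exists>t::int. a = m \<otimes> z [^] t"
proof -
  obtain m j where aj: "a = m \<otimes> x [^] (j::int)" and m: "m \<in> M" using aP unfolding PS_def by blast
  have mN: "m \<in> N" using M m by blast
  have "x [^] j = inv m \<otimes> a" unfolding aj using Nc[OF mN] xG by simp
  then have "x [^] j \<in> N" using Ninv[OF mN] a Nmult by simp
  then obtain t where t: "j = int p * t" using idx by blast
  have "a = m \<otimes> x [^] (int p * t)" using aj t by simp
  then have "a = m \<otimes> z [^] t" unfolding x_pow_p_mult .
  then show ?thesis using m by blast
qed

lemma K:
  assumes M: "subgroup M G" and MN: "M \<subseteq> N"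
    and c1: "\<And>m. m \<in> M \<Longrightarrow> phi m \<in> M"
    and c2: "\<And>m. m \<in> M \<Longrightarrow> inv x \<otimes> m \<otimes> x \<in> M"
    and c: "c \<in> M" and cx: "x \<otimes> c \<noteq> c \<otimes> x"
    and a: "a \<in> N" and d: "dl a \<in> PS M x"
  shows "a \<in> PS M x"
proof -
  have S: "subgroup (PS M x) G"
    by (rule PS_subgroup[OF M xG]) (use c1 c2 in \<open>auto simp: phi_def\<close>)
  have cS: "c \<in> PS M x" using PS_incl[OF M c] .
  have xS: "x \<in> PS M x" using PS_gen[OF M xG] .
  have ac: "a \<in> carrier G" using Nc[OF a] .
  have dx: "dl a \<otimes> x \<in> PS M x" using subgroup.m_closed[OF S d xS] .
  have idx': "inv (dl a) \<otimes> x \<in> PS M x" using subgroup.m_closed[OF S subgroup.m_inv_closed[OF S d] xS] .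
  show ?thesis
  proof (rule Y1[OF S cS xS _ ac])
    show "c \<otimes> x \<noteq> x \<otimes> c" using cx by metis
  next
    fix h assume h: "h \<in> PS M x"
    then obtain m j where hj: "h = m \<otimes> x [^] (j::int)" and m: "m \<in> M" unfolding PS_def by blast
    have mN: "m \<in> N" using MN m by blast
    have mc: "m \<in> carrier G" using Nc[OF mN] .
    have "a \<otimes> h \<otimes> inv a = m \<otimes> (a \<otimes> x [^] j \<otimes> inv a)"
      unfolding hj using Ncomm[OF a mN] ac mc xG by (simp add: m_assoc[symmetric])
    also have "\<dots> = m \<otimes> (dl a \<otimes> x) [^] j"
      using conj_int_pow[OF ac xG] conj_ax[OF a] by simp
    finally show "a \<otimes> h \<otimes> inv a \<in> PS M x"
      using subgroup.m_closed[OF S PS_incl[OF M m] subgroup_int_pow_closed[OF S dx]] by simp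
    have "inv a \<otimes> h \<otimes> inv (inv a) = m \<otimes> (inv a \<otimes> x [^] j \<otimes> inv (inv a))"
      unfolding hj using Ncomm[OF Ninv[OF a] mN] ac mc xG by (simp add: m_assoc[symmetric])
    also have "\<dots> = m \<otimes> (inv (dl a) \<otimes> x) [^] j"
      using conj_int_pow[of "inv a" x j] ac xG conj_ax'[OF a] by simp
    finally show "inv a \<otimes> h \<otimes> a \<in> PS M x"
      using subgroup.m_closed[OF S PS_incl[OF M m] subgroup_int_pow_closed[OF S idx']] ac by simp
  qed
qed

definition Pw :: "int \<Rightarrow> 'a set" where "Pw k = {b [^] k | b. b \<in> N}"

lemma Pw_N: "Pw k \<subseteq> N" unfolding Pw_def using Npow by blast

lemma Pw_sub: "subgroup (Pw k) G"
proof (rule subgroupI)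
  show "Pw k \<subseteq> carrier G" using Pw_N Nc by blast
  have "\<one> [^] k \<in> Pw k" unfolding Pw_def using None by blast
  then show "Pw k \<noteq> {}" by blast
next
  fix a assume "a \<in> Pw k"
  then obtain b where b: "b \<in> N" "a = b [^] k" unfolding Pw_def by blast
  have "inv a = (inv b) [^] k" using b Nc by (simp add: int_pow_inv)
  then show "inv a \<in> Pw k" unfolding Pw_def using Ninv b by blast
next
  fix a c assume "a \<in> Pw k" "c \<in> Pw k"
  then obtain b d where b: "b \<in> N" "a = b [^] k" and d: "d \<in> N" "c = d [^] k" unfolding Pw_def by blast
  have "(b \<otimes> d) [^] k = b [^] k \<otimes> d [^] k"
    by (rule int_pow_mult_distrib) (use b d Nc Ncomm in auto)
  then have "a \<otimes> c = (b \<otimes> d) [^] k" using b d by simp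
  then show "a \<otimes> c \<in> Pw k" unfolding Pw_def using Nmult b d by blast
qed

lemma Pw_phi: "m \<in> Pw k \<Longrightarrow> phi m \<in> Pw k"
proof -
  assume "m \<in> Pw k"
  then obtain b where b: "b \<in> N" "m = b [^] k" unfolding Pw_def by blast
  have "phi m = (phi b) [^] k" using b phi_pow Nc by simp
  then show ?thesis unfolding Pw_def using phiN b by blast
qed

lemma Pw_phi': "m \<in> Pw k \<Longrightarrow> inv x \<otimes> m \<otimes> x \<in> Pw k"
proof -
  assume "m \<in> Pw k"
  then obtain b where b: "b \<in> N" "m = b [^] k" unfolding Pw_def by blast
  have "inv x \<otimes> m \<otimes> x = (inv x \<otimes> b \<otimes> inv (inv x)) [^] k"
    using b conj_int_pow[of "inv x" b k] xG Nc by simp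
  moreover have "inv x \<otimes> b \<otimes> inv (inv x) \<in> N" using Nnorm[of "inv x" b] xG b by simp
  ultimately show ?thesis unfolding Pw_def using xG by auto
qed

lemma Pw_mem: "b \<in> N \<Longrightarrow> b [^] k \<in> Pw k" unfolding Pw_def by blast

lemma phi_iter: "a \<in> carrier G \<Longrightarrow> (phi ^^ i) a = x [^] i \<otimes> a \<otimes> inv (x [^] i)"
proof (induction i)
  case 0 then show ?case by simp
next
  case (Suc i)
  have e: "x [^] Suc i = x \<otimes> x [^] i" using nat_pow_Suc2[OF xG] .
  show ?case unfolding e using Suc xG by (simp add: phi_def m_assoc inv_mult_group)
qed

lemma phi_iter_p: "a \<in> carrier G \<Longrightarrow> (phi ^^ p) a = a"
proof -
  assume a: "a \<in> carrier G"
  have "(phi ^^ p) a = z \<otimes> a \<otimes> inv z" unfolding phi_iter[OF a] z_def ..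
  also have "\<dots> = a" using z_central[OF a] a zG by (simp add: m_assoc)
  finally show ?thesis .
qed

lemma phi_iter_N: "a \<in> N \<Longrightarrow> (phi ^^ i) a \<in> N"
  by (induction i) (auto simp: phiN)

lemma dl_iter_N: "a \<in> N \<Longrightarrow> (dl ^^ i) a \<in> N"
  by (induction i) (auto simp: dlN)

lemma rp_sub: "subgroup H G \<Longrightarrow> (\<And>i. i < n \<Longrightarrow> f i \<in> H) \<Longrightarrow> rp G f n \<in> H"
  by (induction n) (auto simp: subgroup.one_closed subgroup.m_closed)

lemma rp_N: "(\<And>i. i < n \<Longrightarrow> f i \<in> N) \<Longrightarrow> rp G f n \<in> N"
  using rp_sub[OF Nsub] by blast

lemma rp_cong: "(\<And>i. i < n \<Longrightarrow> f i = g i) \<Longrightarrow> rp G f n = rp G g n"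
  by (induction n) auto

lemma rp_mult:
  "(\<And>i. i < n \<Longrightarrow> f i \<in> N) \<Longrightarrow> (\<And>i. i < n \<Longrightarrow> g i \<in> N) \<Longrightarrow>
   rp G (\<lambda>i. f i \<otimes> g i) n = rp G f n \<otimes> rp G g n"
proof (induction n)
  case 0 then show ?case by simp
next
  case (Suc n)
  have fN: "rp G f n \<in> N" "f n \<in> N" using Suc.prems rp_N[of n f] by auto
  have gN: "rp G g n \<in> N" "g n \<in> N" using Suc.prems rp_N[of n g] by auto
  have "rp G (\<lambda>i. f i \<otimes> g i) (Suc n) = rp G f n \<otimes> rp G g n \<otimes> (f n \<otimes> g n)"
    using Suc by simp
  also have "\<dots> = rp G f n \<otimes> (f n \<otimes> (rp G g n \<otimes> g n))"
    using fN gN Nc Nlcomm[of "rp G g n" "f n" "g n"] by (simp add: m_assoc)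
  also have "\<dots> = rp G f (Suc n) \<otimes> rp G g (Suc n)"
    using fN gN Nc by (simp add: m_assoc)
  finally show ?case .
qed

lemma rp_phi: "(\<And>i. i < n \<Longrightarrow> f i \<in> carrier G) \<Longrightarrow> phi (rp G f n) = rp G (\<lambda>i. phi (f i)) n"
proof (induction n)
  case 0 then show ?case using xG by (simp add: phi_def)
next
  case (Suc n)
  have "rp G f n \<in> carrier G" using rp_sub[OF subgroup_self, of n f] Suc.prems by auto
  then show ?case using Suc phi_mult by simp
qed

lemma rp_inv: "(\<And>i. i < n \<Longrightarrow> f i \<in> N) \<Longrightarrow> inv (rp G f n) = rp G (\<lambda>i. inv (f i)) n"
proof (induction n)
  case 0 then show ?case by simp
next
  case (Suc n)
  have fN: "rp G f n \<in> N" "f n \<in> N" using Suc.prems rp_N[of n f] by auto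
  have "inv (rp G f (Suc n)) = inv (f n) \<otimes> inv (rp G f n)" using fN Nc by (simp add: inv_mult_group)
  also have "\<dots> = inv (rp G f n) \<otimes> inv (f n)" using Ncomm Ninv fN by simp
  finally show ?case using Suc by simp
qed

lemma rp_shift: "(\<And>i. i < Suc n \<Longrightarrow> f i \<in> carrier G) \<Longrightarrow> rp G f (Suc n) = f 0 \<otimes> rp G (\<lambda>i. f (Suc i)) n"
proof (induction n)
  case 0 then show ?case by simp
next
  case (Suc n)
  have c: "rp G (\<lambda>i. f (Suc i)) n \<in> carrier G" using rp_sub[OF subgroup_self, of n] Suc.prems by auto
  have "rp G f (Suc (Suc n)) = rp G f (Suc n) \<otimes> f (Suc n)" by simp
  also have "\<dots> = f 0 \<otimes> rp G (\<lambda>i. f (Suc i)) n \<otimes> f (Suc n)" using Suc by simp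
  also have "\<dots> = f 0 \<otimes> rp G (\<lambda>i. f (Suc i)) (Suc n)" using Suc.prems c by (simp add: m_assoc)
  finally show ?case .
qed

end


context sctx begin

definition bt :: "'a \<Rightarrow> nat \<Rightarrow> nat \<Rightarrow> 'a" where
  "bt a j i = ((phi ^^ i) a) [^] ((-1::int) ^ i * int (j choose i))"

lemma bt_N: "a \<in> N \<Longrightarrow> bt a j i \<in> N"
  unfolding bt_def using phi_iter_N Npow by simp

lemma binom: assumes a: "a \<in> N" shows "(dl ^^ j) a = rp G (bt a j) (Suc j)"
proof (induction j)
  case 0 then show ?case using a Nc by (simp add: bt_def)
next
  case (Suc j)
  define P where "P = rp G (bt a j) (Suc j)"
  define Q where "Q i = ((phi ^^ Suc i) a) [^] ((-1::int) ^ Suc i * int (j choose i))" for i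
  define R where "R i = ((phi ^^ Suc i) a) [^] ((-1::int) ^ Suc i * int (j choose Suc i))" for i
  have QN: "Q i \<in> N" for i unfolding Q_def using phi_iter_N a Npow phiN by simp
  have RN: "R i \<in> N" for i unfolding R_def using phi_iter_N a Npow phiN by simp
  have btN: "bt a j i \<in> N" for i using bt_N a .
  have PN: "P \<in> N" unfolding P_def using rp_N btN by blast
  have 1: "inv (phi P) = rp G Q (Suc j)"
  proof -
    have "phi P = rp G (\<lambda>i. phi (bt a j i)) (Suc j)" unfolding P_def
      using rp_phi btN Nc by blast
    then have "inv (phi P) = rp G (\<lambda>i. inv (phi (bt a j i))) (Suc j)"
      using rp_inv[of "Suc j" "\<lambda>i. phi (bt a j i)"] phiN btN by simp
    also have "\<dots> = rp G Q (Suc j)"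
    proof (rule rp_cong)
      fix i
      have c: "(phi ^^ i) a \<in> carrier G" using phi_iter_N a Nc by blast
      have "inv (phi (bt a j i)) = inv (((phi ^^ Suc i) a) [^] ((-1::int) ^ i * int (j choose i)))"
        unfolding bt_def using phi_pow[OF c] by simp
      also have "\<dots> = ((phi ^^ Suc i) a) [^] (- ((-1::int) ^ i * int (j choose i)))"
        using int_pow_neg phiG c by simp
      also have "\<dots> = Q i" unfolding Q_def by simp
      finally show "inv (phi (bt a j i)) = Q i" .
    qed
    finally show ?thesis .
  qed
  have 2: "bt a (Suc j) (Suc i) = Q i \<otimes> R i" for i
  proof -
    have c: "(phi ^^ Suc i) a \<in> carrier G" using phi_iter_N a Nc by blast
    have e: "(-1::int) ^ Suc i * int (Suc j choose Suc i) =
          (-1::int) ^ Suc i * int (j choose i) + (-1::int) ^ Suc i * int (j choose Suc i)"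
      by (simp add: algebra_simps)
    have "bt a (Suc j) (Suc i) = ((phi ^^ Suc i) a) [^] ((-1::int) ^ Suc i * int (Suc j choose Suc i))"
      unfolding bt_def ..
    also have "\<dots> = ((phi ^^ Suc i) a) [^] ((-1::int) ^ Suc i * int (j choose i) + (-1::int) ^ Suc i * int (j choose Suc i))"
      by (simp only: e)
    also have "\<dots> = Q i \<otimes> R i" unfolding Q_def R_def by (rule int_pow_mult[OF c])
    finally show ?thesis .
  qed
  have 3: "rp G (bt a (Suc j)) (Suc (Suc j)) = a \<otimes> (rp G Q (Suc j) \<otimes> rp G R (Suc j))"
  proof -
    have "rp G (bt a (Suc j)) (Suc (Suc j)) = bt a (Suc j) 0 \<otimes> rp G (\<lambda>i. bt a (Suc j) (Suc i)) (Suc j)"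
      using rp_shift[of "Suc j" "bt a (Suc j)"] bt_N a Nc by blast
    also have "bt a (Suc j) 0 = a" unfolding bt_def using a Nc by simp
    also have "rp G (\<lambda>i. bt a (Suc j) (Suc i)) (Suc j) = rp G (\<lambda>i. Q i \<otimes> R i) (Suc j)"
      using 2 by (intro rp_cong) simp
    also have "\<dots> = rp G Q (Suc j) \<otimes> rp G R (Suc j)" using rp_mult QN RN by blast
    finally show ?thesis .
  qed
  have 4: "rp G R (Suc j) = rp G R j"
  proof -
    have "R j = \<one>" unfolding R_def by (simp add: binomial_eq_0)
    moreover have "rp G R j \<in> carrier G" using rp_N RN Nc by blast
    ultimately show ?thesis by simp
  qed
  have 5: "P = a \<otimes> rp G R j"
  proof -
    have "P = bt a j 0 \<otimes> rp G (\<lambda>i. bt a j (Suc i)) j"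
      unfolding P_def using rp_shift[of j "bt a j"] bt_N a Nc by blast
    also have "bt a j 0 = a" unfolding bt_def using a Nc by simp
    also have "rp G (\<lambda>i. bt a j (Suc i)) j = rp G R j"
      by (rule rp_cong) (simp add: bt_def R_def)
    finally show ?thesis .
  qed
  have RjN: "rp G R j \<in> N" using rp_N RN by blast
  have QjN: "rp G Q (Suc j) \<in> N" using rp_N QN by blast
  have "(dl ^^ Suc j) a = dl P" using Suc unfolding P_def by simp
  also have "\<dots> = a \<otimes> rp G R j \<otimes> rp G Q (Suc j)" unfolding dl_def 1 unfolding 5 ..
  also have "\<dots> = a \<otimes> (rp G Q (Suc j) \<otimes> rp G R j)"
    using Ncomm[OF RjN QjN] a Nc RjN QjN by (simp add: m_assoc)
  also have "\<dots> = rp G (bt a (Suc j)) (Suc (Suc j))" unfolding 3 4 ..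
  finally show ?case .
qed

lemma dlp: assumes a: "a \<in> N" shows "(dl ^^ p) a \<in> Pw (int p)"
proof -
  have ac: "a \<in> carrier G" using Nc a .
  obtain q where pq: "p = Suc q" using p_gt1 by (cases p) auto
  have R1: "rp G (\<lambda>i. bt a p (Suc i)) q \<in> Pw (int p)"
  proof (rule rp_sub[OF Pw_sub])
    fix i assume i: "i < q"
    have "p dvd (p choose Suc i)" by (rule dvd_choose_prime) (use i pq pprime in auto)
    then obtain c where c: "p choose Suc i = p * c" by blast
    have ci: "(phi ^^ Suc i) a \<in> N" using phi_iter_N a by blast
    have "bt a p (Suc i) = ((phi ^^ Suc i) a) [^] (((-1::int) ^ Suc i * int c) * int p)"
      unfolding bt_def c by (simp add: algebra_simps)
    also have "\<dots> = (((phi ^^ Suc i) a) [^] ((-1::int) ^ Suc i * int c)) [^] int p"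
      using int_pow_pow Nc ci by simp
    finally show "bt a p (Suc i) \<in> Pw (int p)" using Pw_mem Npow ci by simp
  qed
  have R1N: "rp G (\<lambda>i. bt a p (Suc i)) q \<in> N" using R1 Pw_N by blast
  have "(dl ^^ p) a = rp G (bt a p) p \<otimes> bt a p p" using binom[OF a] by simp
  also have "rp G (bt a p) p = a \<otimes> rp G (\<lambda>i. bt a p (Suc i)) q"
  proof -
    have "rp G (bt a p) (Suc q) = bt a p 0 \<otimes> rp G (\<lambda>i. bt a p (Suc i)) q"
      using rp_shift[of q "bt a p"] bt_N a Nc by blast
    moreover have "bt a p 0 = a" unfolding bt_def using ac by simp
    ultimately show ?thesis using pq by simp
  qed
  also have "bt a p p = a [^] ((-1::int) ^ p)"
    unfolding bt_def using phi_iter_p[OF ac] by simp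
  also have "a \<otimes> rp G (\<lambda>i. bt a p (Suc i)) q \<otimes> a [^] ((-1::int) ^ p)
      = rp G (\<lambda>i. bt a p (Suc i)) q \<otimes> a [^] (1 + (-1::int) ^ p)"
    using Ncomm[OF a R1N] ac Nc[OF R1N] by (simp add: m_assoc int_pow_mult)
  finally have e: "(dl ^^ p) a = rp G (\<lambda>i. bt a p (Suc i)) q \<otimes> a [^] (1 + (-1::int) ^ p)" .
  have "a [^] (1 + (-1::int) ^ p) \<in> Pw (int p)"
  proof (cases "even p")
    case True
    then have "p = 2" using pprime primes_dvd_imp_eq two_is_prime_nat by blast
    then show ?thesis using Pw_mem[OF a, of 2] by simp
  next
    case False
    then show ?thesis using Pw_mem[OF None, of "int p"] by simp
  qed
  then show ?thesis unfolding e using subgroup.m_closed[OF Pw_sub R1] by blast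
qed

end


context sctx begin

lemma K_Pw:
  assumes c: "c \<in> Pw k" and cx: "x \<otimes> c \<noteq> c \<otimes> x" and a: "a \<in> N" and d: "dl a \<in> PS (Pw k) x"
  shows "a \<in> PS (Pw k) x"
  using K[OF Pw_sub Pw_N Pw_phi Pw_phi' c cx a d] .

lemma Ddiv: "\<exists>k::int. k \<ge> 2 \<and> (\<forall>a\<in>N. \<exists>b\<in>N. \<exists>t::int. a = b [^] k \<otimes> z [^] t)"
proof (cases "\<exists>b\<in>N. dl b [^] (int p) \<noteq> \<one>")
  case True
  then obtain b where b: "b \<in> N" "dl b [^] (int p) \<noteq> \<one>" by blast
  define c where "c = b [^] (int p)"
  have cP: "c \<in> Pw (int p)" unfolding c_def using Pw_mem[OF b(1)] .
  have cN: "c \<in> N" using cP Pw_N by blast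
  have cx: "x \<otimes> c \<noteq> c \<otimes> x" using dl_one_iff[OF cN] dl_pow[OF b(1)] b(2) unfolding c_def by simp
  have main: "a \<in> PS (Pw (int p)) x" if a: "a \<in> N" for a
  proof -
    have "\<forall>j. j \<le> p \<longrightarrow> (dl ^^ (p - j)) a \<in> PS (Pw (int p)) x"
    proof (intro allI)
      fix j show "j \<le> p \<longrightarrow> (dl ^^ (p - j)) a \<in> PS (Pw (int p)) x"
      proof (induction j)
        case 0
        show ?case using dlp[OF a] PS_incl[OF Pw_sub] by simp
      next
        case (Suc j)
        show ?case
        proof
          assume j: "Suc j \<le> p"
          have e: "Suc (p - Suc j) = p - j" using j by simp
          have bN: "(dl ^^ (p - Suc j)) a \<in> N" using dl_iter_N a by blast
          have "dl ((dl ^^ (p - Suc j)) a) = (dl ^^ (p - j)) a"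
            using funpow.simps(2)[of "p - Suc j" dl] e by (metis comp_apply)
          then have "dl ((dl ^^ (p - Suc j)) a) \<in> PS (Pw (int p)) x" using Suc j by simp
          then show "(dl ^^ (p - Suc j)) a \<in> PS (Pw (int p)) x"
            using K_Pw[OF cP cx bN] by blast
        qed
      qed
    qed
    then have "(dl ^^ (p - p)) a \<in> PS (Pw (int p)) x" by blast
    then show ?thesis by simp
  qed
  show ?thesis
  proof (intro exI conjI ballI)
    show "int p \<ge> 2" using p_gt1 by simp
    fix a assume a: "a \<in> N"
    obtain m t where m: "m \<in> Pw (int p)" and at: "a = m \<otimes> z [^] (t::int)"
      using PS_N[OF Pw_N a main[OF a]] by blast
    obtain b where "b \<in> N" "m = b [^] (int p)" using m unfolding Pw_def by blast
    then show "\<exists>b\<in>N. \<exists>t::int. a = b [^] int p \<otimes> z [^] t" using at by blast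
  qed
next
  case False
  then have ex: "\<And>b. b \<in> N \<Longrightarrow> dl b [^] (int p) = \<one>" by blast
  have pw1: "dl b [^] (int p + 1) = dl b" if b: "b \<in> N" for b
    using ex[OF b] dlG[OF b] by (simp add: int_pow_mult)
  define c where "c = a0 [^] (int p + 1)"
  have cP: "c \<in> Pw (int p + 1)" unfolding c_def using Pw_mem[OF a0N] .
  have cN: "c \<in> N" using cP Pw_N by blast
  have "dl c = dl a0" unfolding c_def using dl_pow[OF a0N] pw1[OF a0N] by simp
  then have cx: "x \<otimes> c \<noteq> c \<otimes> x" using dl_one_iff[OF cN] dl_one_iff[OF a0N] a0x by simp
  show ?thesis
  proof (intro exI conjI ballI)
    show "int p + 1 \<ge> 2" using p_gt1 by simp
    fix a assume a: "a \<in> N"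
    have "dl a \<in> Pw (int p + 1)" using Pw_mem[OF dlN[OF a], of "int p + 1"] pw1[OF a] by simp
    then have "dl a \<in> PS (Pw (int p + 1)) x" using PS_incl[OF Pw_sub] by blast
    then have "a \<in> PS (Pw (int p + 1)) x" using K_Pw[OF cP cx a] by blast
    then obtain m t where m: "m \<in> Pw (int p + 1)" and at: "a = m \<otimes> z [^] (t::int)"
      using PS_N[OF Pw_N a] by blast
    obtain b where "b \<in> N" "m = b [^] (int p + 1)" using m unfolding Pw_def by blast
    then show "\<exists>b\<in>N. \<exists>t::int. a = b [^] (int p + 1) \<otimes> z [^] t" using at by blast
  qed
qed

end


context group begin

lemma pow_distrib_comm:
  assumes "a \<in> carrier G" "b \<in> carrier G" "a \<otimes> b = b \<otimes> a"
  shows "(a \<otimes> b) [^] (i::int) = a [^] i \<otimes> b [^] i"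
  using int_pow_mult_distrib assms by blast

lemma F3_aux:
  assumes N: "subgroup N G" and Nc: "\<And>a b. a \<in> N \<Longrightarrow> b \<in> N \<Longrightarrow> a \<otimes> b = b \<otimes> a"
    and k: "(k::int) \<ge> 2"
  shows "\<forall>H. subgroup H G \<longrightarrow> H \<subseteq> N \<longrightarrow> (\<forall>a\<in>N. \<exists>b\<in>N. a \<otimes> inv (b [^] k) \<in> H) \<longrightarrow>
      set gs \<subseteq> N \<longrightarrow> N \<subseteq> generate G (set gs \<union> H) \<longrightarrow> (\<exists>e::int. e mod k = 1 \<and> (\<forall>a\<in>N. a [^] e \<in> H))"
proof (induction gs)
  case Nil
  show ?case
  proof (intro allI impI)
    fix H assume H: "subgroup H G" "N \<subseteq> generate G (set [] \<union> H)"
    have "generate G H \<subseteq> H" using generate_subgroup_incl[OF _ H(1), of H] by simp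
    then have "N \<subseteq> H" using H by simp
    moreover have "(1::int) mod k = 1" using k by simp
    ultimately show "\<exists>e::int. e mod k = 1 \<and> (\<forall>a\<in>N. a [^] e \<in> H)"
      using subgroup.mem_carrier[OF N] by (intro exI[of _ 1]) auto
  qed
next
  case (Cons g gs)
  show ?case
  proof (intro allI impI)
    fix H assume H: "subgroup H G" and HN: "H \<subseteq> N" and dv: "\<forall>a\<in>N. \<exists>b\<in>N. a \<otimes> inv (b [^] k) \<in> H"
      and gs: "set (g # gs) \<subseteq> N" and gen: "N \<subseteq> generate G (set (g # gs) \<union> H)"
    have NC: "\<And>a. a \<in> N \<Longrightarrow> a \<in> carrier G" using subgroup.mem_carrier[OF N] .
    have gN: "g \<in> N" using gs by simp
    have gc: "g \<in> carrier G" using NC gN .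
    have HC: "\<And>h. h \<in> H \<Longrightarrow> h \<in> carrier G" using subgroup.mem_carrier[OF H] .
    have gh: "g \<otimes> h = h \<otimes> g" if "h \<in> H" for h
    proof -
      have "h \<in> N" using HN that by blast
      then show ?thesis using Nc[OF gN] by simp
    qed
    have cj: "g \<otimes> h \<otimes> inv g = h" if "h \<in> H" for h
    proof -
      have "g \<otimes> h \<otimes> inv g = h \<otimes> g \<otimes> inv g" using gh[OF that] by simp
      then show ?thesis using gc HC[OF that] by (simp add: m_assoc)
    qed
    have cj': "inv g \<otimes> h \<otimes> g = h" if "h \<in> H" for h
    proof -
      have "inv g \<otimes> h \<otimes> g = inv g \<otimes> (g \<otimes> h)" using gh[OF that] gc HC[OF that] by (simp add: m_assoc)
      then show ?thesis using gc HC[OF that] by simp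
    qed
    define H' where "H' = PS H g"
    have H': "subgroup H' G" unfolding H'_def
      by (rule PS_subgroup[OF H gc]) (use cj cj' in auto)
    have HH': "H \<subseteq> H'" unfolding H'_def using PS_incl[OF H] by blast
    have gH': "g \<in> H'" unfolding H'_def using PS_gen[OF H gc] .
    have H'N: "H' \<subseteq> N"
    proof
      fix w assume "w \<in> H'"
      then obtain h j where hj: "w = h \<otimes> g [^] (j::int)" "h \<in> H" unfolding H'_def PS_def by blast
      have "h \<in> N" using HN hj(2) by blast
      then show "w \<in> N" unfolding hj(1) using subgroup.m_closed[OF N _ subgroup_int_pow_closed[OF N gN]] by simp
    qed
    have dv': "\<forall>a\<in>N. \<exists>b\<in>N. a \<otimes> inv (b [^] k) \<in> H'" using dv HH' by blast
    have gen': "N \<subseteq> generate G (set gs \<union> H')"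
    proof -
      have "set (g # gs) \<union> H \<subseteq> set gs \<union> H'" using HH' gH' by auto
      then show ?thesis using order_trans[OF gen mono_generate] by blast
    qed
    have gs': "set gs \<subseteq> N" using gs by simp
    obtain e' where e': "e' mod k = 1" "\<forall>a\<in>N. a [^] e' \<in> H'"
      using Cons.IH[rule_format, OF H' H'N _ gs' gen'] dv' by blast
    obtain b where b: "b \<in> N" "g \<otimes> inv (b [^] k) \<in> H" using dv gN by blast
    define h0 where "h0 = g \<otimes> inv (b [^] k)"
    have h0H: "h0 \<in> H" using b h0_def by simp
    have bc: "b \<in> carrier G" using NC b by simp
    have g_eq: "g = h0 \<otimes> b [^] k" unfolding h0_def using gc bc by (simp add: m_assoc)
    obtain h1 t where h1: "h1 \<in> H" "b [^] e' = h1 \<otimes> g [^] (t::int)"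
      using e'(2) b(1) unfolding H'_def PS_def by blast
    have h0N: "h0 \<in> N" using HN h0H by blast
    have h1N: "h1 \<in> N" using HN h1 by blast
    have bkN: "b [^] k \<in> N" using subgroup_int_pow_closed[OF N b(1)] .
    have gtN: "g [^] t \<in> N" using subgroup_int_pow_closed[OF N gN] .
    have "g [^] e' = (h0 \<otimes> b [^] k) [^] e'" using g_eq by simp
    also have "\<dots> = h0 [^] e' \<otimes> (b [^] k) [^] e'"
      using pow_distrib_comm[OF NC[OF h0N] NC[OF bkN] Nc[OF h0N bkN]] .
    also have "(b [^] k) [^] e' = (b [^] e') [^] k" using int_pow_pow bc by (simp add: mult.commute)
    also have "\<dots> = h1 [^] k \<otimes> (g [^] t) [^] k"
      unfolding h1(2) using pow_distrib_comm[OF NC[OF h1N] NC[OF gtN] Nc[OF h1N gtN]] .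
    also have "(g [^] t) [^] k = g [^] (t * k)" using int_pow_pow gc by simp
    finally have ge: "g [^] e' = h0 [^] e' \<otimes> (h1 [^] k \<otimes> g [^] (t * k))" .
    define f where "f = e' - t * k"
    have gf: "g [^] f = h0 [^] e' \<otimes> h1 [^] k"
    proof -
      have "g [^] f = g [^] e' \<otimes> inv (g [^] (t * k))" unfolding f_def using int_pow_diff gc by simp
      also have "\<dots> = h0 [^] e' \<otimes> h1 [^] k" unfolding ge using HC h0H h1 gc by (simp add: m_assoc)
      finally show ?thesis .
    qed
    have gfH: "g [^] f \<in> H" unfolding gf
      using subgroup.m_closed[OF H subgroup_int_pow_closed[OF H h0H] subgroup_int_pow_closed[OF H h1(1)]] .
    have fmod: "f mod k = 1" unfolding f_def using e'(1) k by (simp add: mod_diff_eq[symmetric])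
    show "\<exists>e::int. e mod k = 1 \<and> (\<forall>a\<in>N. a [^] e \<in> H)"
    proof (intro exI conjI ballI)
      show "(e' * f) mod k = 1" using e'(1) fmod k by (simp add: mod_mult_eq[symmetric])
      fix a assume a: "a \<in> N"
      obtain h2 s where h2: "h2 \<in> H" "a [^] e' = h2 \<otimes> g [^] (s::int)"
        using e'(2) a unfolding H'_def PS_def by blast
      have h2N: "h2 \<in> N" using HN h2 by blast
      have gsN: "g [^] s \<in> N" using subgroup_int_pow_closed[OF N gN] .
      have "a [^] (e' * f) = (a [^] e') [^] f" using int_pow_pow NC a by simp
      also have "\<dots> = h2 [^] f \<otimes> (g [^] s) [^] f"
        unfolding h2(2) using pow_distrib_comm[OF NC[OF h2N] NC[OF gsN] Nc[OF h2N gsN]] .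
      also have "(g [^] s) [^] f = (g [^] f) [^] s" using int_pow_pow gc by (simp add: mult.commute)
      finally show "a [^] (e' * f) \<in> H"
        using subgroup.m_closed[OF H subgroup_int_pow_closed[OF H h2(1)] subgroup_int_pow_closed[OF H gfH]] by simp
    qed
  qed
qed

lemma F1_aux:
  assumes N: "subgroup N G" and Nc: "\<And>a b. a \<in> N \<Longrightarrow> b \<in> N \<Longrightarrow> a \<otimes> b = b \<otimes> a"
    and E: "(E::nat) > 0" and ex: "\<And>a. a \<in> N \<Longrightarrow> a [^] E = \<one>"
  shows "\<forall>H. subgroup H G \<longrightarrow> H \<subseteq> N \<longrightarrow> finite H \<longrightarrow>
      set gs \<subseteq> N \<longrightarrow> N \<subseteq> generate G (set gs \<union> H) \<longrightarrow> finite N"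
proof (induction gs)
  case Nil
  show ?case
  proof (intro allI impI)
    fix H assume H: "subgroup H G" "finite H" "N \<subseteq> generate G (set [] \<union> H)"
    have "generate G H \<subseteq> H" using generate_subgroup_incl[OF _ H(1), of H] by simp
    then have "N \<subseteq> H" using H by simp
    then show "finite N" using H(2) finite_subset by blast
  qed
next
  case (Cons g gs)
  show ?case
  proof (intro allI impI)
    fix H assume H: "subgroup H G" and HN: "H \<subseteq> N" and fH: "finite H"
      and gs: "set (g # gs) \<subseteq> N" and gen: "N \<subseteq> generate G (set (g # gs) \<union> H)"
    have NC: "\<And>a. a \<in> N \<Longrightarrow> a \<in> carrier G" using subgroup.mem_carrier[OF N] .
    have gN: "g \<in> N" using gs by simp
    have gc: "g \<in> carrier G" using NC gN .
    have HC: "\<And>h. h \<in> H \<Longrightarrow> h \<in> carrier G" using subgroup.mem_carrier[OF H] .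
    have gh: "g \<otimes> h = h \<otimes> g" if "h \<in> H" for h
    proof -
      have "h \<in> N" using HN that by blast
      then show ?thesis using Nc[OF gN] by simp
    qed
    have cj: "g \<otimes> h \<otimes> inv g = h" if "h \<in> H" for h
    proof -
      have "g \<otimes> h \<otimes> inv g = h \<otimes> g \<otimes> inv g" using gh[OF that] by simp
      then show ?thesis using gc HC[OF that] by (simp add: m_assoc)
    qed
    have cj': "inv g \<otimes> h \<otimes> g = h" if "h \<in> H" for h
    proof -
      have "inv g \<otimes> h \<otimes> g = inv g \<otimes> (g \<otimes> h)" using gh[OF that] gc HC[OF that] by (simp add: m_assoc)
      then show ?thesis using gc HC[OF that] by simp
    qed
    define H' where "H' = PS H g"
    have H': "subgroup H' G" unfolding H'_def
      by (rule PS_subgroup[OF H gc]) (use cj cj' in auto)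
    have HH': "H \<subseteq> H'" unfolding H'_def using PS_incl[OF H] by blast
    have gH': "g \<in> H'" unfolding H'_def using PS_gen[OF H gc] .
    have H'N: "H' \<subseteq> N"
    proof
      fix w assume "w \<in> H'"
      then obtain h j where hj: "w = h \<otimes> g [^] (j::int)" "h \<in> H" unfolding H'_def PS_def by blast
      have "h \<in> N" using HN hj(2) by blast
      then show "w \<in> N" unfolding hj(1) using subgroup.m_closed[OF N _ subgroup_int_pow_closed[OF N gN]] by simp
    qed
    have gE: "g [^] (int E) = \<one>" using ex[OF gN] by (simp add: int_pow_int)
    have gred: "g [^] j = g [^] (j mod int E)" for j :: int
    proof -
      have "g [^] j = g [^] (int E * (j div int E) + j mod int E)" by simp
      also have "\<dots> = g [^] (int E * (j div int E)) \<otimes> g [^] (j mod int E)"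
        by (rule int_pow_mult[OF gc])
      also have "g [^] (int E * (j div int E)) = (g [^] int E) [^] (j div int E)"
        using int_pow_pow[OF gc] by simp
      finally show ?thesis using gE gc by simp
    qed
    have "H' \<subseteq> (\<lambda>(h, i). h \<otimes> g [^] i) ` (H \<times> {0..<int E})"
    proof
      fix w assume "w \<in> H'"
      then obtain h j where w: "w = h \<otimes> g [^] (j::int)" "h \<in> H" unfolding H'_def PS_def by blast
      have "w = (\<lambda>(h, i). h \<otimes> g [^] i) (h, j mod int E)" using w gred by simp
      moreover have "(h, j mod int E) \<in> H \<times> {0..<int E}" using w E by simp
      ultimately show "w \<in> (\<lambda>(h, i). h \<otimes> g [^] i) ` (H \<times> {0..<int E})" by blast
    qed
    then have fH': "finite H'" using fH finite_subset by blast
    have gen': "N \<subseteq> generate G (set gs \<union> H')"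
    proof -
      have "set (g # gs) \<union> H \<subseteq> set gs \<union> H'" using HH' gH' by auto
      then show ?thesis using order_trans[OF gen mono_generate] by blast
    qed
    have gs': "set gs \<subseteq> N" using gs by simp
    show "finite N" using Cons.IH[rule_format, OF H' H'N fH' gs' gen'] .
  qed
qed

lemma gen_map:
  assumes A: "A \<subseteq> carrier G"
    and fm: "\<And>a b. a \<in> carrier G \<Longrightarrow> b \<in> carrier G \<Longrightarrow> f (a \<otimes> b) = f a \<otimes> f b"
    and f1: "f \<one> = \<one>" and fi: "\<And>a. a \<in> carrier G \<Longrightarrow> f (inv a) = inv (f a)"
    and fA: "\<And>a. a \<in> A \<Longrightarrow> f a \<in> generate G A"
    and l: "l \<in> generate G A"
  shows "f l \<in> generate G A"
  using l
proof (induction rule: generate.induct)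
  case one then show ?case using f1 generate.one by simp
next
  case (incl h) then show ?case using fA by simp
next
  case (inv h)
  have hc: "h \<in> carrier G" using inv A by blast
  have "f h \<in> generate G A" using fA inv by blast
  then have "inv (f h) \<in> generate G A" using generate_m_inv_closed[OF A] by blast
  then show ?case using fi[OF hc] by simp
next
  case (eng h1 h2) then show ?case using fm generate_in_carrier[OF A] generate.eng by simp
qed

end


context sctx begin

definition Zs where "Zs = {z [^] (i::int) | i. True}"

lemma Zs_sub: "subgroup Zs G"
proof (rule subgroupI)
  show "Zs \<subseteq> carrier G" unfolding Zs_def using zG by auto
  have "z [^] (0::int) \<in> Zs" unfolding Zs_def by blast
  then show "Zs \<noteq> {}" by blast
next
  fix a assume "a \<in> Zs"
  then obtain i where "a = z [^] (i::int)" unfolding Zs_def by blast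
  then have "inv a = z [^] (-i)" using zG by (simp add: int_pow_neg)
  then show "inv a \<in> Zs" unfolding Zs_def by blast
next
  fix a b assume "a \<in> Zs" "b \<in> Zs"
  then obtain i j where "a = z [^] (i::int)" "b = z [^] (j::int)" unfolding Zs_def by blast
  then have "a \<otimes> b = z [^] (i + j)" using zG by (simp add: int_pow_mult)
  then show "a \<otimes> b \<in> Zs" unfolding Zs_def by blast
qed

lemma Zs_N: "Zs \<subseteq> N" unfolding Zs_def using Npow[OF zN] by blast

lemma psi_phi: "a \<in> carrier G \<Longrightarrow> inv x \<otimes> phi a \<otimes> x = a"
  unfolding phi_def using xG by (simp add: m_assoc)

lemma fg_N:
  assumes fg: "finitely_generated_group G"
  shows "\<exists>gs. set gs \<subseteq> N \<and> N \<subseteq> generate G (set gs \<union> Zs)"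
proof -
  obtain S where S: "finite S" "S \<subseteq> carrier G" "generate G S = carrier G"
    using fg unfolding finitely_generated_group_def by blast
  have "\<forall>s\<in>S. \<exists>n j. n \<in> N \<and> s = n \<otimes> x [^] (j::int)" using gen S(2) by blast
  then obtain nf jf where nf: "\<And>s. s \<in> S \<Longrightarrow> nf s \<in> N \<and> s = nf s \<otimes> x [^] (jf s::int)"
    by metis
  define GS where "GS = (\<lambda>(s, i). (phi ^^ i) (nf s)) ` (S \<times> {..<p})"
  have fGS: "finite GS" unfolding GS_def using S(1) by simp
  obtain gs where gs: "set gs = GS" using finite_list[OF fGS] by blast
  have GSN: "GS \<subseteq> N" unfolding GS_def using nf phi_iter_N by auto
  define A where "A = GS \<union> Zs"
  have AN: "A \<subseteq> N" unfolding A_def using GSN Zs_N by blast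
  have AC: "A \<subseteq> carrier G" using AN Nc by blast
  define L where "L = generate G A"
  have LN: "L \<subseteq> N" unfolding L_def using generate_subgroup_incl[OF AN Nsub] .
  have Lsub: "subgroup L G" unfolding L_def using generate_is_subgroup[OF AC] .
  have p0: "0 < p" using p_gt1 by simp
  have phiA: "phi a \<in> L" if a: "a \<in> A" for a
  proof -
    have "phi a \<in> A"
    proof (cases "a \<in> GS")
      case True
      then obtain s i where si: "s \<in> S" "i < p" "a = (phi ^^ i) (nf s)" unfolding GS_def by auto
      show ?thesis
      proof (cases "Suc i < p")
        case True
        then have "phi a = (\<lambda>(s, i). (phi ^^ i) (nf s)) (s, Suc i)" using si by simp
        then show ?thesis unfolding A_def GS_def using si True by blast
      next
        case False
        then have "Suc i = p" using si by simp
        then have "phi a = (phi ^^ p) (nf s)" using si by (metis comp_apply funpow.simps(2))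
        also have "\<dots> = nf s" using phi_iter_p Nc nf si by blast
        also have "\<dots> = (\<lambda>(s, i). (phi ^^ i) (nf s)) (s, 0)" by simp
        finally show ?thesis unfolding A_def GS_def using si p0 by blast
      qed
    next
      case False
      then have "a \<in> Zs" using a unfolding A_def by blast
      then obtain i where "a = z [^] (i::int)" unfolding Zs_def by blast
      then have "phi a = a" using phi_zpow by simp
      then show ?thesis using a by simp
    qed
    then show ?thesis unfolding L_def by (rule generate.incl)
  qed
  have psiA: "inv x \<otimes> a \<otimes> x \<in> L" if a: "a \<in> A" for a
  proof -
    have "inv x \<otimes> a \<otimes> x \<in> A"
    proof (cases "a \<in> GS")
      case True
      then obtain s i where si: "s \<in> S" "i < p" "a = (phi ^^ i) (nf s)" unfolding GS_def by auto
      have nfc: "nf s \<in> carrier G" using Nc nf si by blast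
      obtain i' where i': "i' < p" "(phi ^^ i) (nf s) = phi ((phi ^^ i') (nf s))"
      proof (cases i)
        case 0
        obtain q where q: "p = Suc q" using p0 by (cases p) auto
        have "(phi ^^ i) (nf s) = (phi ^^ p) (nf s)" using 0 phi_iter_p nfc by simp
        also have "\<dots> = phi ((phi ^^ q) (nf s))" using q by simp
        finally show ?thesis using that[of q] q by simp
      next
        case (Suc i'')
        then show ?thesis using that[of i''] si by simp
      qed
      have "inv x \<otimes> a \<otimes> x = (phi ^^ i') (nf s)"
        using si(3) i'(2) psi_phi phi_iter_N nf si(1) Nc by simp
      moreover have "(phi ^^ i') (nf s) = (\<lambda>(s, i). (phi ^^ i) (nf s)) (s, i')" by simp
      moreover have "(s, i') \<in> S \<times> {..<p}" using si i' by simp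
      ultimately show ?thesis unfolding A_def GS_def by (metis UnI1 image_eqI)
    next
      case False
      then have aZ: "a \<in> Zs" using a unfolding A_def by blast
      then obtain i where ai: "a = z [^] (i::int)" unfolding Zs_def by blast
      have "inv x \<otimes> a \<otimes> x = a" unfolding ai using zpow_central[OF xG] xG zG by (simp add: m_assoc)
      then show ?thesis using a by simp
    qed
    then show ?thesis unfolding L_def by (rule generate.incl)
  qed
  have phiL: "phi l \<in> L" if "l \<in> L" for l
  proof -
    have "phi l \<in> generate G A"
    proof (rule gen_map[OF AC, where f=phi and l=l])
      fix a b assume "a \<in> carrier G" "b \<in> carrier G"
      then show "phi (a \<otimes> b) = phi a \<otimes> phi b" using phi_mult by simp
    next
      show "phi \<one> = \<one>" using xG by (simp add: phi_def)
    next
      fix a assume "a \<in> carrier G" then show "phi (inv a) = inv (phi a)" using phi_inv by simp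
    next
      fix a assume "a \<in> A" then show "phi a \<in> generate G A" using phiA unfolding L_def by simp
    next
      show "l \<in> generate G A" using that unfolding L_def .
    qed
    then show ?thesis unfolding L_def .
  qed
  have psiL: "inv x \<otimes> l \<otimes> x \<in> L" if "l \<in> L" for l
  proof -
    have "(\<lambda>w. inv x \<otimes> w \<otimes> x) l \<in> generate G A"
    proof (rule gen_map[OF AC, where f="\<lambda>w. inv x \<otimes> w \<otimes> x" and l=l])
      fix a b assume "a \<in> carrier G" "b \<in> carrier G"
      then show "inv x \<otimes> (a \<otimes> b) \<otimes> x = (inv x \<otimes> a \<otimes> x) \<otimes> (inv x \<otimes> b \<otimes> x)"
        using xG by (simp add: m_assoc)
    next
      show "inv x \<otimes> \<one> \<otimes> x = \<one>" using xG by simp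
    next
      fix a assume "a \<in> carrier G"
      then show "inv x \<otimes> inv a \<otimes> x = inv (inv x \<otimes> a \<otimes> x)" using xG by (simp add: m_assoc inv_mult_group)
    next
      fix a assume "a \<in> A" then show "inv x \<otimes> a \<otimes> x \<in> generate G A" using psiA unfolding L_def by simp
    next
      show "l \<in> generate G A" using that unfolding L_def .
    qed
    then show ?thesis unfolding L_def by simp
  qed
  have PL: "subgroup (PS L x) G"
    by (rule PS_subgroup[OF Lsub xG]) (use phiL psiL in \<open>auto simp: phi_def\<close>)
  have "S \<subseteq> PS L x"
  proof
    fix s assume s: "s \<in> S"
    have "nf s \<in> GS" unfolding GS_def using s p0 by force
    then have "nf s \<in> L" unfolding L_def A_def by (simp add: generate.incl)
    then show "s \<in> PS L x" using nf[OF s] unfolding PS_def by blast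
  qed
  then have GP: "carrier G \<subseteq> PS L x" using generate_subgroup_incl[OF _ PL] S(3) by metis
  have "N \<subseteq> L"
  proof
    fix a assume a: "a \<in> N"
    have "a \<in> PS L x" using GP Nc[OF a] by blast
    then obtain l t where l: "l \<in> L" and at: "a = l \<otimes> z [^] (t::int)" using PS_N[OF LN a] by blast
    have "z [^] t \<in> L" unfolding L_def A_def Zs_def by (rule generate.incl) blast
    then show "a \<in> L" unfolding at using subgroup.m_closed[OF Lsub l] by simp
  qed
  then show ?thesis using gs unfolding L_def A_def using GSN by blast
qed

end


context sctx begin

lemma x_red: "x [^] (j::int) = z [^] (j div int p) \<otimes> x [^] (j mod int p)"
proof -
  have "x [^] j = x [^] (int p * (j div int p) + j mod int p)" by simp
  also have "\<dots> = x [^] (int p * (j div int p)) \<otimes> x [^] (j mod int p)" by (rule int_pow_mult[OF xG])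
  finally show ?thesis unfolding x_pow_p_mult .
qed

lemma z_red: assumes o0h: "z [^] (int ord0) = \<one>" shows "z [^] (j::int) = z [^] (j mod int ord0)"
proof -
  have "z [^] j = z [^] (int ord0 * (j div int ord0) + j mod int ord0)" by simp
  also have "\<dots> = z [^] (int ord0 * (j div int ord0)) \<otimes> z [^] (j mod int ord0)" by (rule int_pow_mult[OF zG])
  also have "z [^] (int ord0 * (j div int ord0)) = (z [^] int ord0) [^] (j div int ord0)" using int_pow_pow[OF zG] by simp
  finally show ?thesis using o0h zG by simp
qed

lemma zinf_of:
  assumes fg: "finitely_generated_group G" and inf: "infinite (carrier G)"
    and gs: "set gs \<subseteq> N" "N \<subseteq> generate G (set gs \<union> Zs)"
    and E: "E > 0" and EZ: "\<And>a. a \<in> N \<Longrightarrow> \<exists>i::int. a [^] (E::int) = z [^] i"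
    and zi: "z [^] (i::int) = \<one>"
  shows "i = 0"
proof (rule ccontr)
  assume i0: "i \<noteq> 0"
  define ord0 where "ord0 = nat \<bar>i\<bar>"
  have o0: "ord0 > 0" unfolding ord0_def using i0 by simp
  have zo: "z [^] (int ord0) = \<one>"
  proof (cases "i \<ge> 0")
    case True then show ?thesis unfolding ord0_def using zi by simp
  next
    case False
    then have "int ord0 = - i" unfolding ord0_def by simp
    then show ?thesis using zi zG by (simp add: int_pow_neg)
  qed
  define En where "En = nat (E * int ord0)"
  have En0: "En > 0" unfolding En_def using E o0 by simp
  have ex: "a [^] En = \<one>" if a: "a \<in> N" for a
  proof -
    obtain j where j: "a [^] E = z [^] (j::int)" using EZ[OF a] by blast
    have e1: "int En = E * int ord0" unfolding En_def using E o0 by simp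
    have "a [^] En = a [^] (int En)" by (simp add: int_pow_int)
    also have "\<dots> = a [^] (E * int ord0)" by (simp only: e1)
    also have "\<dots> = (a [^] E) [^] (int ord0)" using int_pow_pow Nc[OF a] by simp
    also have "\<dots> = (z [^] int ord0) [^] j" unfolding j using int_pow_pow[OF zG] by (simp add: mult.commute)
    finally show ?thesis using zo by simp
  qed
  have "Zs \<subseteq> (\<lambda>j. z [^] j) ` {0..<int ord0}"
  proof
    fix w assume "w \<in> Zs"
    then obtain j where w: "w = z [^] (j::int)" unfolding Zs_def by blast
    have "w = z [^] (j mod int ord0)" unfolding w using z_red[OF zo] .
    moreover have "j mod int ord0 \<in> {0..<int ord0}" using o0 by simp
    ultimately show "w \<in> (\<lambda>j. z [^] j) ` {0..<int ord0}" by blast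
  qed
  then have fZ: "finite Zs" using finite_subset by (metis finite_atLeastLessThan_int finite_imageI)
  have "\<forall>H. subgroup H G \<longrightarrow> H \<subseteq> N \<longrightarrow> finite H \<longrightarrow>
      set gs \<subseteq> N \<longrightarrow> N \<subseteq> generate G (set gs \<union> H) \<longrightarrow> finite N"
    by (rule F1_aux[OF Nsub Ncomm En0 ex])
  then have fN: "finite N" using Zs_sub Zs_N fZ gs by blast
  have "carrier G \<subseteq> (\<lambda>(n, j). n \<otimes> x [^] j) ` (N \<times> {0..<int p})"
  proof
    fix g assume g: "g \<in> carrier G"
    obtain n j where n: "n \<in> N" and gj: "g = n \<otimes> x [^] (j::int)" using gen[OF g] by blast
    have g1: "g = (n \<otimes> z [^] (j div int p)) \<otimes> x [^] (j mod int p)"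
      unfolding gj using Nc[OF n] zG xG by (subst x_red[of j]) (simp add: m_assoc)
    have g2: "n \<otimes> z [^] (j div int p) \<in> N" using Nmult[OF n Npow[OF zN]] .
    have g3: "j mod int p \<in> {0..<int p}" using p_gt1 by simp
    show "g \<in> (\<lambda>(n, j). n \<otimes> x [^] j) ` (N \<times> {0..<int p})"
    proof (rule image_eqI[where x="(n \<otimes> z [^] (j div int p), j mod int p)"])
      show "g = (\<lambda>(n, j). n \<otimes> x [^] j) (n \<otimes> z [^] (j div int p), j mod int p)" using g1 by simp
      show "(n \<otimes> z [^] (j div int p), j mod int p) \<in> N \<times> {0..<int p}" using g2 g3 by simp
    qed
  qed
  moreover have "finite ((\<lambda>(n, j). n \<otimes> x [^] j) ` (N \<times> {0..<int p}))" using fN by simp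
  ultimately have "finite (carrier G)" by (rule finite_subset)
  then show False using inf by simp
qed

lemma final:
  assumes fg: "finitely_generated_group G" and inf: "infinite (carrier G)"
  shows False
proof -
  obtain k :: int where k: "k \<ge> 2" and kd: "\<forall>a\<in>N. \<exists>b\<in>N. \<exists>t::int. a = b [^] k \<otimes> z [^] t"
    using Ddiv by blast
  obtain gs where gs: "set gs \<subseteq> N" "N \<subseteq> generate G (set gs \<union> Zs)" using fg_N[OF fg] by blast
  have dvZ: "\<forall>a\<in>N. \<exists>b\<in>N. a \<otimes> inv (b [^] k) \<in> Zs"
  proof
    fix a assume a: "a \<in> N"
    obtain b t where b: "b \<in> N" and at: "a = b [^] k \<otimes> z [^] (t::int)" using kd a by blast
    have bkc: "b [^] k \<in> carrier G" using Nc[OF b] by simp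
    have "a \<otimes> inv (b [^] k) = z [^] t \<otimes> b [^] k \<otimes> inv (b [^] k)"
      unfolding at using zpow_central[OF bkc] by simp
    also have "\<dots> = z [^] t" using bkc zG by (simp add: m_assoc)
    finally have "a \<otimes> inv (b [^] k) \<in> Zs" unfolding Zs_def by blast
    then show "\<exists>b\<in>N. a \<otimes> inv (b [^] k) \<in> Zs" using b by blast
  qed
  have "\<forall>H. subgroup H G \<longrightarrow> H \<subseteq> N \<longrightarrow> (\<forall>a\<in>N. \<exists>b\<in>N. a \<otimes> inv (b [^] k) \<in> H) \<longrightarrow>
      set gs \<subseteq> N \<longrightarrow> N \<subseteq> generate G (set gs \<union> H) \<longrightarrow> (\<exists>e::int. e mod k = 1 \<and> (\<forall>a\<in>N. a [^] e \<in> H))"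
    by (rule F3_aux[OF Nsub Ncomm k])
  then obtain e where e: "e mod k = 1" "\<forall>a\<in>N. a [^] e \<in> Zs"
    using Zs_sub Zs_N dvZ gs by blast
  define E where "E = \<bar>e\<bar>"
  have e0: "e \<noteq> 0" using e(1) k by auto
  have E0: "E > 0" unfolding E_def using e0 by simp
  have EZ: "\<exists>i::int. a [^] E = z [^] i" if a: "a \<in> N" for a
  proof -
    obtain i where i: "a [^] e = z [^] (i::int)" using e(2) a unfolding Zs_def by blast
    show ?thesis
    proof (cases "e \<ge> 0")
      case True then show ?thesis unfolding E_def using i by auto
    next
      case False
      then have "E = - e" unfolding E_def by simp
      then have "a [^] E = inv (a [^] e)" using int_pow_neg Nc[OF a] by simp
      also have "\<dots> = z [^] (-i)" unfolding i using int_pow_neg zG by simp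
      finally show ?thesis by blast
    qed
  qed
  have zinf: "\<And>i. z [^] (i::int) = \<one> \<Longrightarrow> i = 0"
    using zinf_of[OF fg inf gs E0 EZ] by blast
  define q where "q = int p * E + 1"
  have q1: "q > E"
  proof -
    have "1 * E \<le> int p * E" by (rule mult_right_mono) (use p_gt1 E0 in auto)
    then show ?thesis unfolding q_def by simp
  qed
  define y where "y = x [^] q"
  have y_eq: "y = z [^] E \<otimes> x"
  proof -
    have "y = x [^] (int p * E) \<otimes> x [^] (1::int)" unfolding y_def q_def by (rule int_pow_mult[OF xG])
    then show ?thesis unfolding x_pow_p_mult using xG by simp
  qed
  have zEc: "z [^] E \<in> carrier G" using zG by simp
  have yG: "y \<in> carrier G" unfolding y_def using xG by simp
  have conj_y: "y \<otimes> g \<otimes> inv y = phi g" if g: "g \<in> carrier G" for g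
  proof -
    have "y \<otimes> g \<otimes> inv y = z [^] E \<otimes> (x \<otimes> g \<otimes> inv x) \<otimes> inv (z [^] E)"
      unfolding y_eq using xG g zEc by (simp add: m_assoc inv_mult_group)
    also have "\<dots> = x \<otimes> g \<otimes> inv x"
      using zpow_central[of "x \<otimes> g \<otimes> inv x" E] xG g zEc by (simp add: m_assoc)
    finally show ?thesis unfolding phi_def .
  qed
  have conj_y': "inv y \<otimes> g \<otimes> y = inv x \<otimes> g \<otimes> x" if g: "g \<in> carrier G" for g
  proof -
    have "inv y \<otimes> g \<otimes> y = inv x \<otimes> (inv (z [^] E) \<otimes> g \<otimes> z [^] E) \<otimes> x"
      unfolding y_eq using xG g zEc by (simp add: m_assoc inv_mult_group)
    also have "inv (z [^] E) \<otimes> g \<otimes> z [^] E = g"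
      using zpow_central[OF g, of E, symmetric] g zEc by (simp add: m_assoc)
    finally show ?thesis .
  qed
  define M where "M = Pw q"
  have Msub: "subgroup M G" unfolding M_def using Pw_sub .
  have MN: "M \<subseteq> N" unfolding M_def using Pw_N .
  have B: "subgroup (PS M y) G"
  proof (rule PS_subgroup[OF Msub yG])
    fix m assume m: "m \<in> M"
    have mc: "m \<in> carrier G" using Nc MN m by blast
    show "y \<otimes> m \<otimes> inv y \<in> M" unfolding conj_y[OF mc] using Pw_phi m unfolding M_def .
    show "inv y \<otimes> m \<otimes> y \<in> M" unfolding conj_y'[OF mc] using Pw_phi' m unfolding M_def .
  qed
  define c where "c = a0 [^] q"
  have cM: "c \<in> M" unfolding c_def M_def using Pw_mem[OF a0N] .
  have cN: "c \<in> N" using cM MN by blast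
  have dlc: "dl c = dl a0"
  proof -
    obtain i where i: "a0 [^] E = z [^] (i::int)" using EZ[OF a0N] by blast
    have "dl (a0 [^] E) = \<one>" unfolding i using dl_one_iff[OF Npow[OF zN]] zpow_central[OF xG] by simp
    then have dE: "dl a0 [^] E = \<one>" using dl_pow[OF a0N] by simp
    have d0: "dl a0 \<in> carrier G" using dlG[OF a0N] .
    have "dl c = dl a0 [^] (E * int p + 1)" unfolding c_def q_def using dl_pow[OF a0N] by (simp add: mult.commute)
    also have "\<dots> = (dl a0 [^] E) [^] (int p) \<otimes> dl a0" using d0 by (simp add: int_pow_mult int_pow_pow)
    finally show ?thesis using dE d0 by simp
  qed
  have cy: "c \<otimes> y \<noteq> y \<otimes> c"
  proof
    assume h: "c \<otimes> y = y \<otimes> c"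
    have cc: "c \<in> carrier G" using Nc[OF cN] .
    have "phi c = c" using conj_y[OF cc] h yG cc by (metis inv_solve_right m_closed)
    then have "x \<otimes> c = c \<otimes> x" unfolding phi_def using xG cc by (metis inv_solve_right m_closed)
    then have "dl a0 = \<one>" using dl_one_iff[OF cN] dlc by simp
    then show False using dl_one_iff[OF a0N] a0x by simp
  qed
  have zB: "z \<in> PS M y"
  proof (rule Y1[OF B PS_incl[OF Msub cM] PS_gen[OF Msub yG] cy zG])
    fix h assume h: "h \<in> PS M y"
    have hc: "h \<in> carrier G" using subgroup.mem_carrier[OF B h] .
    have "z \<otimes> h \<otimes> inv z = h" using z_central[OF hc] hc zG by (simp add: m_assoc)
    then show "z \<otimes> h \<otimes> inv z \<in> PS M y" using h by simp
    have "inv z \<otimes> h \<otimes> z = h" using z_central[OF hc, symmetric] hc zG by (simp add: m_assoc)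
    then show "inv z \<otimes> h \<otimes> z \<in> PS M y" using h by simp
  qed
  then obtain m j where m: "m \<in> M" and zj: "z = m \<otimes> y [^] (j::int)" unfolding PS_def by blast
  obtain b where b: "b \<in> N" and mb: "m = b [^] q" using m unfolding M_def Pw_def by blast
  have mN: "m \<in> N" using MN m by blast
  have yj: "y [^] j = z [^] (E * j) \<otimes> x [^] j"
  proof -
    have "y [^] j = (z [^] E) [^] j \<otimes> x [^] j" unfolding y_eq
      using pow_distrib_comm[OF zEc xG zpow_central[OF xG]] .
    then show ?thesis using int_pow_pow[OF zG] by simp
  qed
  have "y [^] j = inv m \<otimes> z" unfolding zj using Nc[OF mN] yG by simp
  then have yjN: "y [^] j \<in> N" using Nmult[OF Ninv[OF mN] zN] by simp
  have "x [^] j = inv (z [^] (E * j)) \<otimes> y [^] j" unfolding yj using zG xG by simp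
  then have "x [^] j \<in> N" using Nmult[OF Ninv[OF Npow[OF zN]] yjN] by simp
  then obtain t where t: "j = int p * t" using idx by blast
  have "y [^] j = z [^] (q * t)"
  proof -
    have xj: "x [^] j = z [^] t" using t x_pow_p_mult by simp
    have "y [^] j = z [^] (E * j) \<otimes> z [^] t" using yj xj by simp
    also have "\<dots> = z [^] (E * j + t)" using int_pow_mult[OF zG] by simp
    finally show ?thesis unfolding t q_def by (simp add: algebra_simps)
  qed
  then have zeq: "z = b [^] q \<otimes> z [^] (q * t)" using zj mb by simp
  obtain i' where i': "b [^] E = z [^] (i'::int)" using EZ[OF b] by blast
  have bqc: "b [^] q \<in> carrier G" using Nc[OF b] by simp
  have s1: "(b [^] q) [^] E = z [^] (i' * q)"
  proof -
    have "(b [^] q) [^] E = (b [^] E) [^] q" using int_pow_pow Nc[OF b] by (simp add: mult.commute)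
    then show ?thesis unfolding i' using int_pow_pow[OF zG] by simp
  qed
  have s2: "(z [^] (q * t)) [^] E = z [^] (q * t * E)" using int_pow_pow[OF zG] by simp
  have "z [^] E = (b [^] q \<otimes> z [^] (q * t)) [^] E" using zeq by simp
  also have "\<dots> = (b [^] q) [^] E \<otimes> (z [^] (q * t)) [^] E"
    using pow_distrib_comm[OF bqc _ zpow_central[OF bqc, symmetric]] zG by simp
  also have "\<dots> = z [^] (i' * q) \<otimes> z [^] (q * t * E)" unfolding s1 s2 ..
  also have "\<dots> = z [^] (i' * q + q * t * E)" using int_pow_mult[OF zG] by simp
  finally have "z [^] E = z [^] (i' * q + q * t * E)" .
  then have "z [^] (E - (i' * q + q * t * E)) = \<one>" using int_pow_diff[OF zG] zG by simp
  then have h0: "E - (i' * q + q * t * E) = 0" using zinf by blast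
  define w where "w = i' + t * E"
  have Eq: "E = q * w" unfolding w_def using h0 by (simp add: algebra_simps)
  have q0: "q \<ge> 0" using q1 E0 by simp
  show False
  proof (cases "w \<ge> 1")
    case True
    have "q * 1 \<le> q * w" by (rule mult_left_mono) (use True q0 in auto)
    then show False using Eq q1 by simp
  next
    case False
    then have "w \<le> 0" by simp
    then have "q * w \<le> 0" using q0 by (simp add: mult_nonneg_nonpos)
    then show False using Eq E0 by simp
  qed
qed

end


context yn_grp begin

lemma DD_proper:
  assumes sol: "solvable G" and inf: "infinite (carrier G)"
  shows "DD \<noteq> carrier G"
proof
  assume e: "DD = carrier G"
  obtain n where n: "(derived G ^^ n) (carrier G) = {\<one>}" using sol solvable_iff_trivial_derived_seq by blast
  have "(derived G ^^ m) (carrier G) = carrier G" for m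
    by (induction m) (use e in auto)
  then have "carrier G = {\<one>}" using n by simp
  then show False using inf by simp
qed

lemma find_p:
  assumes N0: "subgroup N0 G" and D: "DD \<subseteq> N0" and x: "x \<in> carrier G"
    and a: "a \<in> N0" and xa: "x \<otimes> a \<noteq> a \<otimes> x"
    and cm: "\<And>u v. u \<in> N0 \<Longrightarrow> v \<in> N0 \<Longrightarrow> u \<otimes> v = v \<otimes> u"
  shows "\<exists>p. normalization_semidom_class.prime (p::nat) \<and> x \<notin> PS N0 (x [^] p)"
proof -
  have xN: "x \<notin> N0" using xa cm a by blast
  have N0c: "\<And>u. u \<in> N0 \<Longrightarrow> u \<in> carrier G" using subgroup.mem_carrier[OF N0] .
  have red: "\<exists>j::int. x [^] (1 - int p * j) \<in> N0" if p: "x \<in> PS N0 (x [^] (p::nat))" for p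
  proof -
    obtain n j where n: "n \<in> N0" and xe: "x = n \<otimes> (x [^] p) [^] (j::int)" using p unfolding PS_def by blast
    have e1: "(x [^] p) [^] j = x [^] (int p * j)" using int_pow_pow[OF x, of "int p" j] by (simp add: int_pow_int)
    have "x [^] (1 - int p * j) = x \<otimes> inv (x [^] (int p * j))" using int_pow_diff[OF x] x by simp
    also have "\<dots> = n" using xe e1 n N0c x by (metis int_pow_closed inv_solve_right)
    finally show ?thesis using n by blast
  qed
  have posN: "\<exists>n::nat. 0 < n \<and> x [^] n \<in> N0" if i: "x [^] (i::int) \<in> N0" "i \<noteq> 0" for i
  proof (cases "i > 0")
    case True
    have "x [^] nat i = x [^] i" by (rule pow_nat) (use True in simp)
    then show ?thesis using i True by (intro exI[of _ "nat i"]) simp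
  next
    case False
    then have "x [^] nat (-i) = x [^] (-i)" by (intro pow_nat) simp
    also have "\<dots> = inv (x [^] i)" using int_pow_neg[OF x] by simp
    finally have "x [^] nat (-i) \<in> N0" using subgroup.m_inv_closed[OF N0 i(1)] by simp
    then show ?thesis using i False by (intro exI[of _ "nat (-i)"]) simp
  qed
  show ?thesis
  proof (cases "\<exists>n::nat. 0 < n \<and> x [^] n \<in> N0")
    case True
    define c where "c = (LEAST n::nat. 0 < n \<and> x [^] n \<in> N0)"
    have c: "0 < c" "x [^] c \<in> N0" using LeastI_ex[OF True] unfolding c_def by auto
    have cmin: "\<And>n. 0 < n \<Longrightarrow> x [^] n \<in> N0 \<Longrightarrow> c \<le> n" unfolding c_def by (simp add: Least_le)
    have dv: "int c dvd i" if i: "x [^] (i::int) \<in> N0" for i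
    proof (rule ccontr)
      assume nd: "\<not> int c dvd i"
      define r where "r = i mod int c"
      have r0: "r \<noteq> 0" using nd unfolding r_def by (simp add: dvd_eq_mod_eq_0)
      have r1: "0 \<le> r" "r < int c" unfolding r_def using c(1) by simp_all
      have r: "0 < r" "r < int c" using r0 r1 by simp_all
      have "x [^] r = x [^] (i - int c * (i div int c))" unfolding r_def by (simp add: minus_div_mult_eq_mod[symmetric] algebra_simps)
      also have "\<dots> = x [^] i \<otimes> inv ((x [^] (int c)) [^] (i div int c))"
        using int_pow_diff[OF x] int_pow_pow[OF x] by simp
      finally have "x [^] r \<in> N0"
        using subgroup.m_closed[OF N0 i subgroup.m_inv_closed[OF N0 subgroup_int_pow_closed[OF N0]]] c(2)
        by (simp add: int_pow_int)
      moreover have "x [^] nat r = x [^] r" by (rule pow_nat) (use r in simp)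
      ultimately have "x [^] nat r \<in> N0" by simp
      then have "c \<le> nat r" using cmin r by simp
      then show False using r by simp
    qed
    have c1: "c \<noteq> 1" using c(2) xN x by auto
    obtain p where p: "normalization_semidom_class.prime p" "p dvd c" using prime_factor_nat[OF c1] by blast
    show ?thesis
    proof (intro exI conjI)
      show "normalization_semidom_class.prime p" using p(1) .
      show "x \<notin> PS N0 (x [^] p)"
      proof
        assume "x \<in> PS N0 (x [^] p)"
        then obtain j where "x [^] (1 - int p * j) \<in> N0" using red by blast
        then have "int c dvd (1 - int p * j)" using dv by blast
        moreover have "int p dvd int c" using p(2) by simp
        ultimately have h: "int p dvd (1 - int p * j)" using dvd_trans by blast
        have "int p dvd (1 - int p * j) + int p * j" by (rule dvd_add[OF h]) simp
        then have "int p dvd 1" by simp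
        then show False using p(1) by simp
      qed
    qed
  next
    case False
    show ?thesis
    proof (intro exI conjI)
      show "normalization_semidom_class.prime (2::nat)" by simp
      show "x \<notin> PS N0 (x [^] (2::nat))"
      proof
        assume "x \<in> PS N0 (x [^] (2::nat))"
        then obtain j where j: "x [^] (1 - int 2 * j) \<in> N0" using red by blast
        have "1 - int 2 * j \<noteq> 0" by presburger
        then show False using posN[OF j] False by blast
      qed
    qed
  qed
qed

end

lemma (in yn_grp) main:
  assumes "Yn_group G"
    and "infinite (carrier G)"
    and "finitely_generated_group G"
    and "solvable G"
  shows "comm_group G"
proof (rule ccontr)
  assume nc: "\<not> comm_group G"
  have yg: "yn_grp G" by (rule yn_grp_axioms)
  obtain s t where s: "s \<in> carrier G" and t: "t \<in> carrier G" and st: "s \<otimes> t \<noteq> t \<otimes> s"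
    using nc group_comm_groupI by blast
  have Dne: "DD \<noteq> carrier G" using DD_proper[OF assms(4) assms(2)] .
  have Dcomm: "\<And>u v. u \<in> DD \<Longrightarrow> v \<in> DD \<Longrightarrow> u \<otimes> v = v \<otimes> u"
    using P_comm[OF DD_sub subset_refl Dne] by blast
  define N1 where "N1 = PS DD t"
  have N1sub: "subgroup N1 G" unfolding N1_def
    by (rule PS_subgroup[OF DD_sub t]) (use conj_DD[OF DD_sub subset_refl t] conj_DD'[OF DD_sub subset_refl t] in auto)
  have DDN1: "DD \<subseteq> N1" unfolding N1_def using PS_incl[OF DD_sub] by blast
  have tN1: "t \<in> N1" unfolding N1_def using PS_gen[OF DD_sub t] .
  have ex: "\<exists>N0 x a. subgroup N0 G \<and> DD \<subseteq> N0 \<and> (\<forall>u\<in>N0. \<forall>v\<in>N0. u \<otimes> v = v \<otimes> u)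
      \<and> x \<in> carrier G \<and> a \<in> N0 \<and> x \<otimes> a \<noteq> a \<otimes> x"
  proof (cases "N1 = carrier G")
    case False
    have "\<forall>u\<in>N1. \<forall>v\<in>N1. u \<otimes> v = v \<otimes> u" using P_comm[OF N1sub DDN1 False] by blast
    then show ?thesis using N1sub DDN1 s tN1 st by blast
  next
    case True
    have "\<exists>d\<in>DD. t \<otimes> d \<noteq> d \<otimes> t"
    proof (rule ccontr)
      assume "\<not> (\<exists>d\<in>DD. t \<otimes> d \<noteq> d \<otimes> t)"
      then have td: "\<And>d. d \<in> DD \<Longrightarrow> t \<otimes> d = d \<otimes> t" by blast
      have Dc: "\<And>d. d \<in> DD \<Longrightarrow> d \<in> carrier G" using subgroup.mem_carrier[OF DD_sub] .
      have cm: "u \<otimes> v = v \<otimes> u" if u: "u \<in> N1" and v: "v \<in> N1" for u v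
      proof -
        obtain d i where d: "d \<in> DD" and ui: "u = d \<otimes> t [^] (i::int)" using u unfolding N1_def PS_def by blast
        obtain d' j where d': "d' \<in> DD" and vj: "v = d' \<otimes> t [^] (j::int)" using v unfolding N1_def PS_def by blast
        have c1: "t [^] i \<otimes> d' = d' \<otimes> t [^] i" using commute_int_pow[OF t Dc[OF d'] td[OF d']] .
        have c2: "t [^] j \<otimes> d = d \<otimes> t [^] j" using commute_int_pow[OF t Dc[OF d] td[OF d]] .
        have e1: "t [^] i \<otimes> (d' \<otimes> t [^] j) = d' \<otimes> (t [^] i \<otimes> t [^] j)"
        proof -
          have "t [^] i \<otimes> (d' \<otimes> t [^] j) = (t [^] i \<otimes> d') \<otimes> t [^] j"
            using Dc[OF d'] t by (simp add: m_assoc)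
          also have "\<dots> = (d' \<otimes> t [^] i) \<otimes> t [^] j" unfolding c1 ..
          finally show ?thesis using Dc[OF d'] t by (simp add: m_assoc)
        qed
        have e2: "t [^] j \<otimes> (d \<otimes> t [^] i) = d \<otimes> (t [^] j \<otimes> t [^] i)"
        proof -
          have "t [^] j \<otimes> (d \<otimes> t [^] i) = (t [^] j \<otimes> d) \<otimes> t [^] i"
            using Dc[OF d] t by (simp add: m_assoc)
          also have "\<dots> = (d \<otimes> t [^] j) \<otimes> t [^] i" unfolding c2 ..
          finally show ?thesis using Dc[OF d] t by (simp add: m_assoc)
        qed
        have "u \<otimes> v = d \<otimes> (t [^] i \<otimes> (d' \<otimes> t [^] j))"
          unfolding ui vj using Dc[OF d] Dc[OF d'] t by (simp add: m_assoc)
        also have "\<dots> = d \<otimes> (d' \<otimes> (t [^] i \<otimes> t [^] j))" unfolding e1 ..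
        also have "\<dots> = (d \<otimes> d') \<otimes> (t [^] i \<otimes> t [^] j)" using Dc[OF d] Dc[OF d'] t by (simp add: m_assoc)
        also have "\<dots> = (d' \<otimes> d) \<otimes> (t [^] j \<otimes> t [^] i)" using Dcomm[OF d d'] pow_commute_self[OF t, of i j] by simp
        also have "\<dots> = d' \<otimes> (d \<otimes> (t [^] j \<otimes> t [^] i))" using Dc[OF d] Dc[OF d'] t by (simp add: m_assoc)
        also have "\<dots> = d' \<otimes> (t [^] j \<otimes> (d \<otimes> t [^] i))" unfolding e2 ..
        also have "\<dots> = v \<otimes> u" unfolding ui vj using Dc[OF d] Dc[OF d'] t by (simp add: m_assoc)
        finally show ?thesis .
      qed
      show False using cm[of s t] s True tN1 st by simp
    qed
    then obtain d where d: "d \<in> DD" "t \<otimes> d \<noteq> d \<otimes> t" by blast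
    show ?thesis using DD_sub Dcomm t d by blast
  qed
  then obtain N0 x a where N0: "subgroup N0 G" and DN0: "DD \<subseteq> N0"
    and cm0: "\<forall>u\<in>N0. \<forall>v\<in>N0. u \<otimes> v = v \<otimes> u" and x: "x \<in> carrier G"
    and a: "a \<in> N0" and xa: "x \<otimes> a \<noteq> a \<otimes> x" by blast
  have gen0: "\<exists>n\<in>N0. \<exists>j::int. g = n \<otimes> x [^] j" if g: "g \<in> carrier G" for g
    using Q_gen[OF N0 DN0 x a xa g] .
  obtain p where pp: "normalization_semidom_class.prime (p::nat)" and xp: "x \<notin> PS N0 (x [^] p)"
    using find_p[OF N0 DN0 x a xa] cm0 by blast
  define N where "N = PS N0 (x [^] p)"
  have xpG: "x [^] p \<in> carrier G" using x by simp
  have Nsub: "subgroup N G" unfolding N_def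
    by (rule PS_subgroup[OF N0 xpG]) (use conj_DD[OF N0 DN0 xpG] conj_DD'[OF N0 DN0 xpG] in auto)
  have N0N: "N0 \<subseteq> N" unfolding N_def using PS_incl[OF N0] by blast
  have DN: "DD \<subseteq> N" using DN0 N0N by blast
  have Nne: "N \<noteq> carrier G" using xp x unfolding N_def by blast
  have sc: "sctx G N x p a"
  proof (intro sctx.intro sctx_axioms.intro yg Nsub x pp)
    show "\<And>u v. u \<in> N \<Longrightarrow> v \<in> N \<Longrightarrow> u \<otimes> v = v \<otimes> u" using P_comm[OF Nsub DN Nne] by blast
    show "\<And>g n. g \<in> carrier G \<Longrightarrow> n \<in> N \<Longrightarrow> g \<otimes> n \<otimes> inv g \<in> N" using conj_DD[OF Nsub DN] by blast
    show "x [^] p \<in> N" unfolding N_def using PS_gen[OF N0 xpG] .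
    show "a \<in> N" using N0N a by blast
    show "x \<otimes> a \<noteq> a \<otimes> x" using xa .
    show "\<And>g. g \<in> carrier G \<Longrightarrow> \<exists>n\<in>N. \<exists>j::int. g = n \<otimes> x [^] j" using gen0 N0N by blast
  qed
  show False using sctx.final[OF sc assms(3) assms(2)] .
qed

theorem theorem3p2:
  fixes G :: "('a, 'b) monoid_scheme"
  assumes "Yn_group G"
    and "infinite (carrier G)"
    and "finitely_generated_group G"
    and "solvable G"
  shows "comm_group G"
proof -
  have grp: "group G" using assms(1) unfolding Yn_group_def by blast
  have yg: "yn_grp G" by (intro yn_grp.intro yn_grp_axioms.intro grp assms(1))
  show ?thesis using yn_grp.main[OF yg assms] .
qed


end
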